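(* Assume that for all $i,j\in I$ the map $u\mapsto\lambda_{ij}(u)$ is continuous on $U$, and that $f\colon I\times U\to\mathbb R$ is continuous. Fix $T>0$ and $w\in\mathrm C(\Delta_e)$, and for $\nu\in\Delta_e$, $\alpha\in A$ set $$\mathcal J_{T,w}(\nu,\alpha)=\int_0^Te^{-\beta t}L\bigl(\phi^\alpha_\nu(t),\chi^\alpha_\nu(t),\alpha(t),w\bigr)\,dt.$$ Then there exist constants $C,K_1,K_2>0$ and a modulus of continuity $\eta$ (a continuous, nondecreasing, subadditive function $\eta\colon[0,\infty)\to[0,\infty)$ with $\eta(t)\to0$ as $t\downarrow0$) such that for all $\alpha\in A$ and all $\nu,\rho\in\Delta_e$, $$\bigl|\mathcal J_{T,w}(\nu,\alpha)-\mathcal J_{T,w}(\rho,\alpha)\bigr|\le K_1|\nu-\rho|+K_2\,\eta(C|\nu-\rho|).$$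
   Context: $I$, $O$ finite sets; $h\colon I\to O$ surjective and non-constant. $U$ compact metric space. For $u\in U$, $\Lambda(u)=(\lambda_{ij}(u))$ real with $\lambda_{ij}(u)\ge0$ for $i\ne j$ and zero row sums. $\mathbf f(u)=(f(i,u))_{i\in I}$ column vector; $\beta>0$. Measures on $I$ are row vectors in $\mathbb R^{|I|}$ with the Euclidean norm $|\cdot|$; $\Delta_a$ ($a\in O$) is the set of probability measures supported in $h^{-1}(a)$; $\Delta_e=\bigcup_a\Delta_a$; $\mathrm C(\Delta_e)$ the continuous real functions on $\Delta_e$; $\mathbb 1_{h^{-1}(a)}$ the column indicator of $h^{-1}(a)$. $F$: for $\nu\in\Delta_a$, $F_j(\nu,u)=[\nu\Lambda(u)]_j-(\nu\Lambda(u)\mathbb 1_{h^{-1}(a)})\nu_j$ for $j\in h^{-1}(a)$, $0$ otherwise. $H_b[\mu]$ ($b\in O$, $\mu\in\mathbb R^{|I|}$): $0$ off $h^{-1}(b)$, $\mu(i)/(\mu\mathbb 1_{h^{-1}(b)})$ on $h^{-1}(b)$ if $\mu\mathbb 1_{h^{-1}(b)}\ne0$, a fixed $\nu_b\in\Delta_b$ otherwise. For $\rho\in\Delta_a$: $r(\rho,u)=-\rho\Lambda(u)\mathbb 1_{h^{-1}(a)}$; $R(\rho,u;D)=\sum_b\mathbb 1_D(H_b[\rho\Lambda(u)])q(\rho,u,b)$, $q(\rho,u,b)=\frac{\rho\Lambda(u)\mathbb 1_{h^{-1}(b)}}{-\rho\Lambda(u)\mathbb 1_{h^{-1}(a)}}\mathbb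 1_{b\ne a}$ if the denominator is nonzero, else $q_a(b)$ ($q_a$ a fixed probability on $O\setminus\{a\}$). $L(\rho,s,u,w)=s[\rho\mathbf f(u)+r(\rho,u)\int_{\Delta_e}w(p)R(\rho,u;dp)]$. $A$ is the set of measurable maps $\alpha\colon[0,\infty)\to U$. For $\rho\in\Delta_a$, $\phi^\alpha_\rho$ is the solution of $z'(t)=F(z(t),\alpha(t))$, $z(0)=\rho$ (it stays in $\Delta_a$), and $\chi^\alpha_\rho(t)=\exp\{-\int_0^tr(\phi^\alpha_\rho(s),\alpha(s))ds\}$. *)

theory Defs
  imports "HOL-Analysis.Analysis"
begin

text \<open>Measures on I are vectors in real^'i (Euclidean norm). Lambda(u) is given by
  lam u i j, the cost vector by f i u, the observation map by h.\<close>

definition Delta :: "('i::finite \<Rightarrow> 'o) \<Rightarrow> 'o \<Rightarrow> (real^'i) set" where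
  "Delta h a = {\<nu>. (\<forall>i. 0 \<le> \<nu>$i) \<and> (\<Sum>i\<in>UNIV. \<nu>$i) = 1 \<and> (\<forall>i. h i \<noteq> a \<longrightarrow> \<nu>$i = 0)}"

definition Delta_e :: "('i::finite \<Rightarrow> 'o) \<Rightarrow> (real^'i) set" where
  "Delta_e h = (\<Union>a. Delta h a)"

definition muLam1 :: "('u \<Rightarrow> 'i::finite \<Rightarrow> 'i \<Rightarrow> real) \<Rightarrow> ('i \<Rightarrow> 'o) \<Rightarrow> real^'i \<Rightarrow> 'u \<Rightarrow> 'o \<Rightarrow> real" where
  "muLam1 lam h \<mu> u b = (\<Sum>i\<in>UNIV. \<Sum>j\<in>{j. h j = b}. \<mu>$i * lam u i j)"

definition muLam :: "('u \<Rightarrow> 'i::finite \<Rightarrow> 'i \<Rightarrow> real) \<Rightarrow> real^'i \<Rightarrow> 'u \<Rightarrow> real^'i" where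
  "muLam lam \<mu> u = (\<chi> j. \<Sum>i\<in>UNIV. \<mu>$i * lam u i j)"

definition Fvf :: "('u \<Rightarrow> 'i::finite \<Rightarrow> 'i \<Rightarrow> real) \<Rightarrow> ('i \<Rightarrow> 'o) \<Rightarrow> 'o \<Rightarrow> real^'i \<Rightarrow> 'u \<Rightarrow> real^'i" where
  "Fvf lam h a \<nu> u = (\<chi> j. if h j = a then (muLam lam \<nu> u)$j - muLam1 lam h \<nu> u a * \<nu>$j else 0)"

text \<open>H_b[mu], with the fixed choice nu0 b in Delta_b\<close>
definition Hb :: "('i::finite \<Rightarrow> 'o) \<Rightarrow> ('o \<Rightarrow> real^'i) \<Rightarrow> 'o \<Rightarrow> real^'i \<Rightarrow> real^'i" where
  "Hb h nu0 b \<mu> = (if (\<Sum>i\<in>{i. h i = b}. \<mu>$i) \<noteq> 0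
      then (\<chi> i. if h i = b then \<mu>$i / (\<Sum>k\<in>{k. h k = b}. \<mu>$k) else 0)
      else nu0 b)"

definition rr :: "('u \<Rightarrow> 'i::finite \<Rightarrow> 'i \<Rightarrow> real) \<Rightarrow> ('i \<Rightarrow> 'o) \<Rightarrow> 'o \<Rightarrow> real^'i \<Rightarrow> 'u \<Rightarrow> real" where
  "rr lam h a \<rho> u = - muLam1 lam h \<rho> u a"

text \<open>q(rho,u,b) for rho in Delta_a, with fixed probabilities qd a on O minus {a}\<close>
definition qq :: "('u \<Rightarrow> 'i::finite \<Rightarrow> 'i \<Rightarrow> real) \<Rightarrow> ('i \<Rightarrow> 'o) \<Rightarrow> ('o \<Rightarrow> 'o \<Rightarrow> real)
    \<Rightarrow> 'o \<Rightarrow> real^'i \<Rightarrow> 'u \<Rightarrow> 'o \<Rightarrow> real" where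
  "qq lam h qd a \<rho> u b = (if - muLam1 lam h \<rho> u a \<noteq> 0
      then muLam1 lam h \<rho> u b / (- muLam1 lam h \<rho> u a) * (if b \<noteq> a then 1 else 0)
      else qd a b)"

text \<open>integral of w against R(rho,u;.), which is the finite sum of point masses
  at H_b[rho Lambda(u)] with weights q(rho,u,b)\<close>
definition intR :: "('u \<Rightarrow> 'i::finite \<Rightarrow> 'i \<Rightarrow> real) \<Rightarrow> ('i \<Rightarrow> 'o::finite) \<Rightarrow> ('o \<Rightarrow> real^'i)
    \<Rightarrow> ('o \<Rightarrow> 'o \<Rightarrow> real) \<Rightarrow> 'o \<Rightarrow> real^'i \<Rightarrow> 'u \<Rightarrow> (real^'i \<Rightarrow> real) \<Rightarrow> real" where
  "intR lam h nu0 qd a \<rho> u w =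
     (\<Sum>b\<in>UNIV. w (Hb h nu0 b (muLam lam \<rho> u)) * qq lam h qd a \<rho> u b)"

definition LL :: "('u \<Rightarrow> 'i::finite \<Rightarrow> 'i \<Rightarrow> real) \<Rightarrow> ('i \<Rightarrow> 'u \<Rightarrow> real) \<Rightarrow> ('i \<Rightarrow> 'o::finite)
    \<Rightarrow> ('o \<Rightarrow> real^'i) \<Rightarrow> ('o \<Rightarrow> 'o \<Rightarrow> real) \<Rightarrow> 'o
    \<Rightarrow> real^'i \<Rightarrow> real \<Rightarrow> 'u \<Rightarrow> (real^'i \<Rightarrow> real) \<Rightarrow> real" where
  "LL lam f h nu0 qd a \<rho> s u w =
     s * ((\<Sum>i\<in>UNIV. \<rho>$i * f i u) + rr lam h a \<rho> u * intR lam h nu0 qd a \<rho> u w)"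

text \<open>Admissible controls: measurable maps [0,oo) -> U (values at negative times irrelevant).\<close>
definition Adm :: "'u::metric_space set \<Rightarrow> (real \<Rightarrow> 'u) set" where
  "Adm U = {\<alpha>. (\<forall>t\<ge>0. \<alpha> t \<in> U) \<and> \<alpha> \<in> borel_measurable (restrict_space lborel {0..})}"

text \<open>The solution of z' = F(z, alpha), z(0) = rho, in integral (Caratheodory) form on [0,oo);
  by convention it is extended by rho to negative times.\<close>
definition phi :: "('u \<Rightarrow> 'i::finite \<Rightarrow> 'i \<Rightarrow> real) \<Rightarrow> ('i \<Rightarrow> 'o) \<Rightarrow> 'o \<Rightarrow> (real \<Rightarrow> 'u)
    \<Rightarrow> real^'i \<Rightarrow> real \<Rightarrow> real^'i" where
  "phi lam h a \<alpha> \<rho> = (THE z. (\<forall>t<0. z t = \<rho>) \<and>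
      (\<forall>t\<ge>0. ((\<lambda>s. Fvf lam h a (z s) (\<alpha> s)) has_integral (z t - \<rho>)) {0..t}))"

definition chi :: "('u \<Rightarrow> 'i::finite \<Rightarrow> 'i \<Rightarrow> real) \<Rightarrow> ('i \<Rightarrow> 'o) \<Rightarrow> 'o \<Rightarrow> (real \<Rightarrow> 'u)
    \<Rightarrow> real^'i \<Rightarrow> real \<Rightarrow> real" where
  "chi lam h a \<alpha> \<rho> t = exp (- integral {0..t} (\<lambda>s. rr lam h a (phi lam h a \<alpha> \<rho> s) (\<alpha> s)))"

definition JJ :: "('u \<Rightarrow> 'i::finite \<Rightarrow> 'i \<Rightarrow> real) \<Rightarrow> ('i \<Rightarrow> 'u \<Rightarrow> real) \<Rightarrow> ('i \<Rightarrow> 'o::finite)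
    \<Rightarrow> ('o \<Rightarrow> real^'i) \<Rightarrow> ('o \<Rightarrow> 'o \<Rightarrow> real) \<Rightarrow> real \<Rightarrow> real \<Rightarrow> (real^'i \<Rightarrow> real)
    \<Rightarrow> 'o \<Rightarrow> real^'i \<Rightarrow> (real \<Rightarrow> 'u) \<Rightarrow> real" where
  "JJ lam f h nu0 qd \<beta> T w a \<nu> \<alpha> = integral {0..T} (\<lambda>t. exp (- \<beta> * t) *
      LL lam f h nu0 qd a (phi lam h a \<alpha> \<nu> t) (chi lam h a \<alpha> \<nu> t) (\<alpha> t) w)"

definition modulus_of_continuity :: "(real \<Rightarrow> real) \<Rightarrow> bool" where
  "modulus_of_continuity \<eta> \<longleftrightarrow> continuous_on {0..} \<eta> \<and> mono_on {0..} \<eta> \<and>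
     (\<forall>t\<ge>0. 0 \<le> \<eta> t) \<and> (\<forall>s\<ge>0. \<forall>t\<ge>0. \<eta> (s + t) \<le> \<eta> s + \<eta> t) \<and>
     (\<eta> \<longlongrightarrow> 0) (at_right 0)"

end

theory Submission
  imports Defs "HOL-Analysis.Analysis"
begin

lemma Delta_iff: "\<nu> \<in> Delta h a \<longleftrightarrow> (\<forall>i. 0 \<le> \<nu>$i) \<and> (\<Sum>i\<in>UNIV. \<nu>$i) = 1 \<and> (\<forall>i. h i \<noteq> a \<longrightarrow> \<nu>$i = 0)"
  by (simp add: Delta_def)

lemma Delta_comp:
  assumes "\<nu> \<in> Delta h a" shows "0 \<le> \<nu>$i" "\<nu>$i \<le> 1" "\<bar>\<nu>$i\<bar> \<le> 1"
proof -
  show "0 \<le> \<nu>$i" using assms by (simp add: Delta_def)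
  have "\<nu>$i \<le> (\<Sum>j\<in>UNIV. \<nu>$j)"
    by (rule member_le_sum) (use assms in \<open>auto simp: Delta_def\<close>)
  then show "\<nu>$i \<le> 1" using assms by (simp add: Delta_def)
  then show "\<bar>\<nu>$i\<bar> \<le> 1" using \<open>0 \<le> \<nu>$i\<close> by simp
qed

lemma Delta_class_sum:
  assumes "\<nu> \<in> Delta h a" shows "(\<Sum>i\<in>{i. h i = a}. \<nu>$i) = 1"
proof -
  have "(\<Sum>i\<in>UNIV. \<nu>$i) = (\<Sum>i\<in>{i. h i = a}. \<nu>$i)"
    by (rule sum.mono_neutral_right) (use assms in \<open>auto simp: Delta_def\<close>)
  then show ?thesis using assms by (simp add: Delta_def)
qed

lemma Delta_l1: assumes "\<nu> \<in> Delta h a" shows "(\<Sum>i\<in>UNIV. \<bar>\<nu>$i\<bar>) = 1"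
  using assms by (simp add: Delta_def)

lemma Delta_norm: assumes "\<nu> \<in> Delta h a" shows "norm \<nu> \<le> 1"
  using norm_le_l1_cart[of \<nu>] Delta_l1[OF assms] by simp

lemma closed_Delta: "closed (Delta h a)"
proof -
  have "Delta h a = (\<Inter>i. {\<nu>. 0 \<le> \<nu>$i}) \<inter> {\<nu>. (\<Sum>i\<in>UNIV. \<nu>$i) = 1} \<inter> (\<Inter>i\<in>{i. h i \<noteq> a}. {\<nu>. \<nu>$i = 0})"
    by (auto simp: Delta_def)
  moreover have "closed {\<nu>::real^'a. (\<Sum>i\<in>UNIV. \<nu>$i) = 1}"
    by (intro closed_Collect_eq continuous_intros)
  ultimately show ?thesis
    by (auto intro!: closed_Int closed_INT closed_Collect_le closed_Collect_eq continuous_intros)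
qed

lemma convex_Delta: "convex (Delta h a)"
  unfolding convex_def Delta_def
  by (auto simp: sum.distrib sum_distrib_left[symmetric])

lemma bounded_Delta: "bounded (Delta h a)"
  unfolding bounded_iff by (intro exI[of _ 1]) (auto intro: Delta_norm)

lemma compact_Delta: "compact (Delta h a)"
  by (metis closed_Delta bounded_Delta compact_eq_bounded_closed)

lemma compact_Delta_e: "compact (Delta_e (h::'i::finite \<Rightarrow> 'o::finite))"
  unfolding Delta_e_def by (intro compact_Union) (auto simp: compact_Delta)

lemma Delta_disj: assumes "\<nu> \<in> Delta h a" "\<nu> \<in> Delta h b" shows "a = b"
proof (rule ccontr)
  assume "a \<noteq> b"
  then have "(\<Sum>i\<in>{i. h i = a}. \<nu>$i) = 0" using assms(2) by (simp add: Delta_def)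
  then show False using Delta_class_sum[OF assms(1)] by simp
qed

lemma Delta_cross:
  fixes \<nu> :: "real^'i::finite"
  assumes "\<nu> \<in> Delta h a" "\<rho> \<in> Delta h b" "a \<noteq> b"
  shows "1 \<le> real CARD('i) * norm (\<nu> - \<rho>)"
proof -
  have "1 = (\<Sum>i\<in>{i. h i = a}. \<nu>$i - \<rho>$i)"
    using Delta_class_sum[OF assms(1)] assms by (simp add: sum_subtractf Delta_def)
  also have "\<dots> \<le> (\<Sum>i\<in>{i. h i = a}. norm (\<nu> - \<rho>))"
    by (intro sum_mono) (metis component_le_norm_cart abs_le_D1 vector_minus_component)
  also have "\<dots> = real (card {i. h i = a}) * norm (\<nu> - \<rho>)" by simp
  also have "\<dots> \<le> real CARD('i) * norm (\<nu> - \<rho>)"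
    by (intro mult_right_mono) (auto intro: card_mono)
  finally show ?thesis .
qed


lemma abs_sum_le_card:
  assumes "finite S" "\<And>i. i \<in> S \<Longrightarrow> \<bar>g i\<bar> \<le> B"
  shows "\<bar>\<Sum>i\<in>S. g i\<bar> \<le> real (card S) * B"
proof -
  have "\<bar>\<Sum>i\<in>S. g i\<bar> \<le> (\<Sum>i\<in>S. \<bar>g i\<bar>)" by (rule sum_abs)
  also have "\<dots> \<le> (\<Sum>i\<in>S. B)" by (intro sum_mono assms)
  finally show ?thesis by simp
qed

lemma muLam1_linear:
  "muLam1 lam h (p - q) u b = muLam1 lam h p u b - muLam1 lam h q u b"
  by (simp add: muLam1_def algebra_simps sum_subtractf)

lemma muLam_linear:
  "muLam lam (p - q) u = muLam lam p u - muLam lam q u"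
  by (simp add: muLam_def vec_eq_iff algebra_simps sum_subtractf)

lemma muLam1_bound:
  fixes p :: "real^'i::finite"
  assumes lb: "\<And>i j. \<bar>lam u i j\<bar> \<le> Lm" and pb: "\<And>i. \<bar>p$i\<bar> \<le> R" and "0 \<le> Lm" "0 \<le> R"
  shows "\<bar>muLam1 lam h p u b\<bar> \<le> real CARD('i) * real CARD('i) * Lm * R"
proof -
  have e: "\<bar>p$i * lam u i j\<bar> \<le> R * Lm" for i j
    unfolding abs_mult by (intro mult_mono pb lb) (use assms in auto)
  have "\<bar>muLam1 lam h p u b\<bar> \<le> real CARD('i) * (real (card {j. h j = b}) * (R * Lm))"
    unfolding muLam1_def by (intro abs_sum_le_card) (auto intro: abs_sum_le_card e)
  also have "\<dots> \<le> real CARD('i) * (real CARD('i) * (R * Lm))"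
    by (intro mult_left_mono mult_right_mono) (use assms in \<open>auto intro: card_mono\<close>)
  finally show ?thesis by (simp add: algebra_simps)
qed

lemma muLam_bound:
  fixes p :: "real^'i::finite"
  assumes lb: "\<And>i j. \<bar>lam u i j\<bar> \<le> Lm" and pb: "\<And>i. \<bar>p$i\<bar> \<le> R" and "0 \<le> Lm" "0 \<le> R"
  shows "\<bar>muLam lam p u $ j\<bar> \<le> real CARD('i) * Lm * R"
proof -
  have e: "\<bar>p$i * lam u i j\<bar> \<le> R * Lm" for i j
    unfolding abs_mult by (intro mult_mono pb lb) (use assms in auto)
  have "\<bar>muLam lam p u $ j\<bar> \<le> real CARD('i) * (R * Lm)"
    unfolding muLam_def by (simp, intro abs_sum_le_card) (auto intro: e)
  then show ?thesis by (simp add: algebra_simps)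
qed

lemma norm_le_card_comp:
  fixes x :: "real^'i::finite"
  assumes "\<And>j. \<bar>x$j\<bar> \<le> B"
  shows "norm x \<le> real CARD('i) * B"
proof -
  have "norm x \<le> (\<Sum>j\<in>UNIV. \<bar>x$j\<bar>)" by (rule norm_le_l1_cart)
  also have "\<dots> \<le> (\<Sum>j\<in>(UNIV::'i set). B)" by (rule sum_mono) (rule assms)
  finally show ?thesis by simp
qed

lemma Fvf_lip:
  fixes p q :: "real^'i::finite"
  assumes lb: "\<And>i j. \<bar>lam u i j\<bar> \<le> Lm" and pb: "\<And>i. \<bar>p$i\<bar> \<le> R" and qb: "\<And>i. \<bar>q$i\<bar> \<le> 1"
    and "0 \<le> Lm" "0 \<le> R"
  shows "norm (Fvf lam h a p u - Fvf lam h a q u) \<le> 3 * real CARD('i)^3 * Lm * (R + 1) * norm (p - q)"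
proof -
  let ?n = "real CARD('i)"
  let ?d = "norm (p - q)"
  have n1: "1 \<le> ?n" by simp
  have d0: "0 \<le> ?d" by simp
  have dq: "\<bar>(p - q)$i\<bar> \<le> ?d" for i by (rule component_le_norm_cart)
  have comp: "\<bar>(Fvf lam h a p u - Fvf lam h a q u)$j\<bar> \<le> 3 * ?n^2 * Lm * (R + 1) * ?d" for j
  proof (cases "h j = a")
    case False then show ?thesis using assms by (simp add: Fvf_def)
  next
    case True
    let ?mp = "muLam1 lam h p u a" and ?mq = "muLam1 lam h q u a"
    have eq: "(Fvf lam h a p u - Fvf lam h a q u)$j
      = muLam lam (p - q) u $ j - (?mp * (p - q)$j + muLam1 lam h (p - q) u a * q$j)"
      using True by (simp add: Fvf_def muLam_linear muLam1_linear algebra_simps)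
    have t1: "\<bar>muLam lam (p - q) u $ j\<bar> \<le> ?n * Lm * ?d"
      by (rule muLam_bound[where lam=lam and u=u and p="p - q" and R="norm (p - q)", OF lb dq]) (use assms in auto)
    have t2: "\<bar>?mp * (p - q)$j\<bar> \<le> (?n * ?n * Lm * R) * ?d"
      unfolding abs_mult by (intro mult_mono muLam1_bound[where lam=lam and u=u and p=p and R=R, OF lb pb] dq) (use assms in auto)
    have t3: "\<bar>muLam1 lam h (p - q) u a * q$j\<bar> \<le> (?n * ?n * Lm * ?d) * 1"
      unfolding abs_mult by (intro mult_mono muLam1_bound[where lam=lam and u=u and p="p - q" and R="norm (p - q)", OF lb dq] qb) (use assms in auto)
    have "?n * Lm * ?d \<le> ?n * ?n * Lm * ?d"
      using n1 assms d0 by (intro mult_right_mono) (auto intro: mult_right_mono)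
    then have "\<bar>(Fvf lam h a p u - Fvf lam h a q u)$j\<bar> \<le> ?n * ?n * Lm * ?d * (R + 2)"
      using t1 t2 t3 unfolding eq by (simp add: algebra_simps)
    also have "\<dots> \<le> ?n * ?n * Lm * ?d * (3 * (R + 1))"
      using assms d0 by (intro mult_left_mono) auto
    finally show ?thesis by (simp add: power2_eq_square algebra_simps)
  qed
  have "norm (Fvf lam h a p u - Fvf lam h a q u) \<le> ?n * (3 * ?n^2 * Lm * (R + 1) * ?d)"
    by (rule norm_le_card_comp[OF comp])
  then show ?thesis by (simp add: power3_eq_cube power2_eq_square algebra_simps)
qed

lemma Fvf_zero: "Fvf lam h a 0 u = 0"
  by (simp add: Fvf_def muLam_def muLam1_def vec_eq_iff)


lemma gronwall:
  fixes g :: "real \<Rightarrow> real"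
  assumes cont: "continuous_on {0..T} g" and c: "0 \<le> c" and L: "0 \<le> L"
    and le: "\<And>s. s \<in> {0..T} \<Longrightarrow> g s \<le> c + L * integral {0..s} g"
    and t: "t \<in> {0..T}"
  shows "g t \<le> c * exp (L * t)"
proof -
  define G where "G s = integral {0..s} g" for s
  define H where "H s = exp (- (L * s)) * (c + L * G s)" for s
  define H' where "H' s = exp (- (L * s)) * (L * g s) - L * exp (- (L * s)) * (c + L * G s)" for s
  have ct: "continuous_on {0..t} g" by (rule continuous_on_subset[OF cont]) (use t in auto)
  have dG: "(G has_real_derivative g s) (at s within {0..t})" if "s \<in> {0..t}" for s
    unfolding G_def by (rule integral_has_real_derivative[OF ct that])
  have dH: "(H has_real_derivative H' s) (at s within {0..t})" if "s \<in> {0..t}" for s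
    unfolding H_def H'_def
    by (rule derivative_eq_intros dG[OF that] refl | simp)+
  have "(H' has_integral (H t - H 0)) {0..t}"
    using t dH by (intro fundamental_theorem_of_calculus)
      (auto simp: has_real_derivative_iff_has_vector_derivative)
  moreover have "H' s \<le> 0" if "s \<in> {0..t}" for s
  proof -
    have "g s \<le> c + L * G s" unfolding G_def using that t by (intro le) auto
    then have "L * g s \<le> L * (c + L * G s)" using L by (rule mult_left_mono)
    then have "L * g s - L * (c + L * G s) \<le> 0" by simp
    moreover have "H' s = exp (- (L * s)) * (L * g s - L * (c + L * G s))"
      unfolding H'_def by (simp add: algebra_simps)
    ultimately show ?thesis by (simp add: mult_nonneg_nonpos)
  qed
  ultimately have "H t - H 0 \<le> 0"
    using has_integral_le[of H' "H t - H 0" "{0..t}" "\<lambda>_. 0" 0] by (simp add: has_integral_0)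
  moreover have "H 0 = c" by (simp add: H_def G_def)
  ultimately have "exp (- (L * t)) * (c + L * G t) \<le> c" unfolding H_def by linarith
  then have "c + L * G t \<le> c * exp (L * t)"
    by (simp add: exp_minus field_simps)
  moreover have "g t \<le> c + L * G t" unfolding G_def using t by (intro le) auto
  ultimately show ?thesis by linarith
qed

lemma gronwall0:
  fixes g :: "real \<Rightarrow> real"
  assumes cont: "continuous_on {0..T} g" and L: "0 \<le> L" and nn: "\<And>s. s \<in> {0..T} \<Longrightarrow> 0 \<le> g s"
    and le: "\<And>s. s \<in> {0..T} \<Longrightarrow> g s \<le> L * integral {0..s} g"
    and t: "t \<in> {0..T}"
  shows "g t = 0"
  using gronwall[OF cont order_refl L _ t] le nn[OF t] by fastforce


lemma integrable_bounded_meas: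
  fixes f :: "real \<Rightarrow> 'b::euclidean_space"
  assumes "f \<in> borel_measurable lebesgue" "\<And>s. s \<in> {a..b} \<Longrightarrow> norm (f s) \<le> C"
  shows "f integrable_on {a..b}"
proof (rule measurable_bounded_by_integrable_imp_integrable[where g="\<lambda>_. C"])
  show "f \<in> borel_measurable (lebesgue_on {a..b})"
    using assms(1) by (rule measurable_restrict_space1)
next
  show "(\<lambda>_. C) integrable_on {a..b}" by (rule integrable_const_ivl)
next
  show "{a..b} \<in> sets lebesgue" by simp
qed (rule assms(2))

lemma borel_leb: "f \<in> borel_measurable borel \<Longrightarrow> f \<in> borel_measurable lebesgue"
  by (rule measurable_completion) (simp add: measurable_lborel2)

lemma cont_meas_leb: "continuous_on UNIV f \<Longrightarrow> f \<in> borel_measurable lebesgue"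
  by (intro borel_leb borel_measurable_continuous_onI)

lemma meas_cont_comp:
  assumes "continuous_on UNIV \<Phi>" "g \<in> borel_measurable M"
  shows "(\<lambda>x. \<Phi> (g x)) \<in> borel_measurable M"
  using measurable_comp[OF assms(2) borel_measurable_continuous_onI[OF assms(1)]] by (simp add: o_def)

lemma meas_cont_comp_on:
  assumes "continuous_on S \<Phi>" "\<And>x. x \<in> space M \<Longrightarrow> g x \<in> S" "g \<in> borel_measurable M"
  shows "(\<lambda>x. \<Phi> (g x)) \<in> borel_measurable M"
proof -
  have "g \<in> M \<rightarrow>\<^sub>M restrict_space borel S"
    using assms(2,3) by (intro measurable_restrict_space2) auto
  from measurable_comp[OF this borel_measurable_continuous_on_restrict[OF assms(1)]]
  show ?thesis by (simp add: o_def)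
qed

lemma cont_glue:
  fixes F :: "real \<Rightarrow> 'b::topological_space"
  assumes "\<And>N. 0 \<le> N \<Longrightarrow> continuous_on {0..N} F" "\<And>t. t \<le> 0 \<Longrightarrow> F t = F 0"
  shows "continuous_on UNIV F"
proof (rule continuous_at_imp_continuous_on, intro ballI)
  fix x :: real
  define N where "N = \<bar>x\<bar> + 1"
  have "continuous_on {..0} (\<lambda>_. F 0)" by simp
  then have "continuous_on {..0} F"
    by (rule continuous_on_eq) (metis assms(2) atMost_iff)
  moreover have "continuous_on {0..N} F" using assms(1) by (simp add: N_def)
  ultimately have "continuous_on ({..0} \<union> {0..N}) F"
    by (intro continuous_on_closed_Un) auto
  moreover have "{..0} \<union> {0..N} = {..N}" unfolding N_def by auto
  ultimately have c: "continuous_on {..N} F" by simp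
  have "x \<in> {..<N}" unfolding N_def by simp
  then have "x \<in> interior {..N}" by (rule interiorI[OF open_lessThan]) auto
  then show "isCont F x" by (rule continuous_on_interior[OF c])
qed

lemma integral_nonpos_ivl: fixes t :: real assumes "t \<le> 0" shows "integral {0..t} g = 0"
proof (cases "t < 0")
  case True then have "{0..t} = {}" by auto
  then show ?thesis by simp
next
  case False then have "t = 0" using assms by simp
  then show ?thesis by simp
qed

lemma indef_cont:
  fixes g :: "real \<Rightarrow> 'b::banach"
  assumes "\<And>N. g integrable_on {0..N}"
  shows "continuous_on UNIV (\<lambda>t. c + integral {0..t} g)"
proof (rule cont_glue)
  show "continuous_on {0..N} (\<lambda>t. c + integral {0..t} g)" for N
    by (intro continuous_on_add continuous_on_const indefinite_integral_continuous_1 assms)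
qed (simp add: integral_nonpos_ivl)


definition lamE :: "(real^'i^'i) \<times> (real^'i) \<Rightarrow> 'i \<Rightarrow> 'i \<Rightarrow> real" where
  "lamE u i j = fst u $ i $ j"
definition fE :: "'i \<Rightarrow> (real^'i^'i) \<times> (real^'i) \<Rightarrow> real" where
  "fE i u = snd u $ i"

lemma cont_Fvf_lamE: "continuous_on UNIV (\<lambda>x. Fvf lamE h a (fst x) (snd x))"
  unfolding Fvf_def muLam_def muLam1_def lamE_def
  apply (rule continuous_on_vec_lambda)
  subgoal for j by (cases "h j = a") (simp_all, intro continuous_intros)
  done

locale odeB =
  fixes h :: "'i::finite \<Rightarrow> 'o" and a :: 'o and B :: "real \<Rightarrow> (real^'i^'i) \<times> (real^'i)" and Lm :: real
  assumes Bmeas: "B \<in> borel_measurable lebesgue"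
    and Boff: "\<And>s i j. i \<noteq> j \<Longrightarrow> 0 \<le> lamE (B s) i j"
    and Brow: "\<And>s i. (\<Sum>j\<in>UNIV. lamE (B s) i j) = 0"
    and Bbnd: "\<And>s i j. \<bar>lamE (B s) i j\<bar> \<le> Lm"
    and Dne: "Delta h a \<noteq> {}"
begin

definition "F p s = Fvf lamE h a p (B s)"
definition "Pj z = closest_point (Delta h a) z"
definition "G z s = F (Pj z) s"
definition "cF = 3 * real CARD('i)^3 * Lm + 1"

lemma Lm0: "0 \<le> Lm" using Bbnd[of 0 undefined undefined] by simp

lemma cF_pos: "0 < cF" unfolding cF_def using Lm0 by (simp add: add_nonneg_pos)

lemma F_lip:
  assumes "\<And>i. \<bar>p$i\<bar> \<le> R" "\<And>i. \<bar>q$i\<bar> \<le> 1" "0 \<le> R"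
  shows "norm (F p s - F q s) \<le> cF * (R + 1) * norm (p - q)"
proof -
  have "norm (F p s - F q s) \<le> 3 * real CARD('i)^3 * Lm * (R + 1) * norm (p - q)"
    unfolding F_def by (rule Fvf_lip[where lam=lamE and u="B s", OF Bbnd assms(1,2) Lm0 assms(3)])
  also have "\<dots> \<le> cF * (R + 1) * norm (p - q)"
    unfolding cF_def using assms(3) by (intro mult_right_mono) auto
  finally show ?thesis .
qed

lemma F_lipD:
  assumes "p \<in> Delta h a" "q \<in> Delta h a"
  shows "norm (F p s - F q s) \<le> 2 * cF * norm (p - q)"
  using F_lip[of p 1 q s] Delta_comp[OF assms(1)] Delta_comp[OF assms(2)] by simp

lemma F_zero: "F 0 s = 0" unfolding F_def by (rule Fvf_zero)

lemma F_bnd: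
  assumes "p \<in> Delta h a" shows "norm (F p s) \<le> 2 * cF"
proof -
  have "norm (F p s - F 0 s) \<le> cF * (1 + 1) * norm (p - 0)"
    by (rule F_lip) (use Delta_comp[OF assms] in auto)
  also have "\<dots> \<le> cF * (1 + 1) * 1"
    using Delta_norm[OF assms] cF_pos by (intro mult_left_mono) auto
  finally show ?thesis by (simp add: F_zero)
qed

lemma Pj_in: "Pj z \<in> Delta h a"
  unfolding Pj_def by (rule closest_point_in_set[OF closed_Delta Dne])

lemma Pj_lip: "norm (Pj z - Pj y) \<le> norm (z - y)"
  using closest_point_lipschitz[OF convex_Delta closed_Delta Dne, of z y]
  by (simp add: Pj_def dist_norm)

lemma Pj_id: "z \<in> Delta h a \<Longrightarrow> Pj z = z"
  unfolding Pj_def by (rule closest_point_self)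

lemma G_lip: "norm (G z s - G y s) \<le> 2 * cF * norm (z - y)"
proof -
  have "norm (G z s - G y s) \<le> 2 * cF * norm (Pj z - Pj y)"
    unfolding G_def by (rule F_lipD[OF Pj_in Pj_in])
  also have "\<dots> \<le> 2 * cF * norm (z - y)"
    using cF_pos by (intro mult_left_mono Pj_lip) auto
  finally show ?thesis .
qed

lemma G_bnd: "norm (G z s) \<le> 2 * cF"
  unfolding G_def by (rule F_bnd[OF Pj_in])

lemma cont_Pj: "continuous_on UNIV Pj"
  unfolding Pj_def by (rule continuous_on_closest_point[OF convex_Delta closed_Delta Dne])

lemma F_meas:
  assumes "x \<in> borel_measurable lebesgue"
  shows "(\<lambda>s. F (x s) s) \<in> borel_measurable lebesgue"
proof -
  have "(\<lambda>s. (x s, B s)) \<in> borel_measurable lebesgue"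
    using assms Bmeas by (rule borel_measurable_Pair)
  from meas_cont_comp[OF cont_Fvf_lamE this, of h a] show ?thesis
    by (simp add: F_def)
qed

lemma G_meas:
  assumes "x \<in> borel_measurable lebesgue"
  shows "(\<lambda>s. G (x s) s) \<in> borel_measurable lebesgue"
  unfolding G_def by (rule F_meas[OF meas_cont_comp[OF cont_Pj assms]])

lemma G_int:
  assumes "x \<in> borel_measurable lebesgue"
  shows "(\<lambda>s. G (x s) s) integrable_on {c..d}"
  by (rule integrable_bounded_meas[OF G_meas[OF assms] G_bnd])

lemma F_int:
  assumes "x \<in> borel_measurable lebesgue" "\<And>s. s \<in> {c..d} \<Longrightarrow> x s \<in> Delta h a"
  shows "(\<lambda>s. F (x s) s) integrable_on {c..d}"
  by (rule integrable_bounded_meas[OF F_meas[OF assms(1)] F_bnd[OF assms(2)]])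

end

lemma power_has_integral:
  fixes t :: real assumes "0 \<le> t"
  shows "((\<lambda>s. s^k) has_integral (t^(Suc k) / real (Suc k))) {0..t}"
proof -
  have "((\<lambda>s. s^(Suc k) / real (Suc k)) has_real_derivative s^k) (at s within {0..t})" for s
    by (rule derivative_eq_intros refl | simp)+
  then have "((\<lambda>s. s^k) has_integral (t^(Suc k) / real (Suc k) - 0^(Suc k) / real (Suc k))) {0..t}"
    using assms by (intro fundamental_theorem_of_calculus)
      (auto simp: has_real_derivative_iff_has_vector_derivative[symmetric])
  then show ?thesis by simp
qed

context odeB begin

primrec pic :: "real^'i \<Rightarrow> nat \<Rightarrow> real \<Rightarrow> real^'i" where
  "pic \<nu> 0 = (\<lambda>t. \<nu>)"
| "pic \<nu> (Suc k) = (\<lambda>t. \<nu> + integral {0..t} (\<lambda>s. G (pic \<nu> k s) s))"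

lemma pic_Suc: "pic \<nu> (Suc k) t = \<nu> + integral {0..t} (\<lambda>s. G (pic \<nu> k s) s)"
  by simp

declare pic.simps(2)[simp del]

lemma pic_cont: "continuous_on UNIV (pic \<nu> k)"
proof (induction k)
  case 0 then show ?case by simp
next
  case (Suc k)
  show ?case unfolding pic.simps(2)
    by (rule indef_cont) (rule G_int[OF cont_meas_leb[OF Suc]])
qed

lemma pic_meas: "pic \<nu> k \<in> borel_measurable lebesgue"
  by (rule cont_meas_leb[OF pic_cont])

lemma pic_int: "(\<lambda>s. G (pic \<nu> k s) s) integrable_on {c..d}"
  by (rule G_int[OF pic_meas])

lemma pic_neg: "t \<le> 0 \<Longrightarrow> pic \<nu> k t = \<nu>"
  by (cases k) (simp_all add: pic_Suc integral_nonpos_ivl)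

lemma pic_diff:
  assumes "0 \<le> t"
  shows "norm (pic \<nu> (Suc k) t - pic \<nu> k t) \<le> (2*cF)^(Suc k) * t^(Suc k) / fact (Suc k)"
  using assms
proof (induction k arbitrary: t)
  case 0
  have "norm (integral {0..t} (\<lambda>s. G \<nu> s)) \<le> integral {0..t} (\<lambda>_. 2*cF)"
    by (rule integral_norm_bound_integral[OF G_int[of "\<lambda>_. \<nu>", simplified] integrable_const_ivl])
      (rule G_bnd)
  also have "\<dots> = t * (2*cF)" using 0 by simp
  finally show ?case by (simp add: pic_Suc algebra_simps)
next
  case (Suc k)
  let ?L = "2*cF"
  define C where "C = ?L^(Suc (Suc k)) / fact (Suc k)"
  have eq: "pic \<nu> (Suc (Suc k)) t - pic \<nu> (Suc k) t
      = integral {0..t} (\<lambda>s. G (pic \<nu> (Suc k) s) s - G (pic \<nu> k s) s)"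
    by (simp only: pic_Suc[of \<nu> "Suc k" t] pic_Suc[of \<nu> k t]) (simp add: integral_diff[OF pic_int pic_int])
  have hi: "((\<lambda>s. C * s^(Suc k)) has_integral (C * (t^(Suc (Suc k)) / real (Suc (Suc k))))) {0..t}"
    by (rule has_integral_mult_right[OF power_has_integral[OF Suc.prems]])
  have "norm (integral {0..t} (\<lambda>s. G (pic \<nu> (Suc k) s) s - G (pic \<nu> k s) s))
      \<le> integral {0..t} (\<lambda>s. C * s^(Suc k))"
  proof (rule integral_norm_bound_integral)
    show "(\<lambda>s. G (pic \<nu> (Suc k) s) s - G (pic \<nu> k s) s) integrable_on {0..t}"
      by (intro integrable_diff pic_int)
    show "(\<lambda>s. C * s^(Suc k)) integrable_on {0..t}" using hi by blast
    fix s assume s: "s \<in> {0..t}"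
    have "norm (G (pic \<nu> (Suc k) s) s - G (pic \<nu> k s) s) \<le> ?L * norm (pic \<nu> (Suc k) s - pic \<nu> k s)"
      by (rule G_lip)
    also have "\<dots> \<le> ?L * (?L^(Suc k) * s^(Suc k) / fact (Suc k))"
      using Suc.IH[of s] s cF_pos by (intro mult_left_mono) auto
    also have "\<dots> = C * s^(Suc k)" by (simp add: C_def)
    finally show "norm (G (pic \<nu> (Suc k) s) s - G (pic \<nu> k s) s) \<le> C * s^(Suc k)" .
  qed
  also have "\<dots> = C * (t^(Suc (Suc k)) / real (Suc (Suc k)))" using hi by blast
  also have "\<dots> = ?L^(Suc (Suc k)) * t^(Suc (Suc k)) / fact (Suc (Suc k))"
    unfolding C_def by (simp add: field_simps fact_Suc[of "Suc k"] del: fact_Suc)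
  finally show ?case unfolding eq .
qed

lemma pic_summable: "summable (\<lambda>k. (2*cF)^(Suc k) * N^(Suc k) / fact (Suc k))"
proof -
  have "summable (\<lambda>n. inverse (fact n) * (2*cF*N)^n)" by (rule summable_exp)
  then have "summable (\<lambda>n. inverse (fact (Suc n)) * (2*cF*N)^(Suc n))"
    by (subst summable_Suc_iff)
  then show ?thesis by (simp add: power_mult_distrib field_simps)
qed

definition "solG \<nu> t = \<nu> + (\<Sum>i. pic \<nu> (Suc i) t - pic \<nu> i t)"

lemma pic_ulim: "uniform_limit {0..N} (pic \<nu>) (solG \<nu>) sequentially"
proof -
  have u: "uniform_limit {0..N} (\<lambda>k t. \<Sum>i<k. pic \<nu> (Suc i) t - pic \<nu> i t)
      (\<lambda>t. \<Sum>i. pic \<nu> (Suc i) t - pic \<nu> i t) sequentially"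
  proof (rule Weierstrass_m_test[OF _ pic_summable])
    fix k t assume t: "t \<in> {0..N}"
    have "norm (pic \<nu> (Suc k) t - pic \<nu> k t) \<le> (2*cF)^(Suc k) * t^(Suc k) / fact (Suc k)"
      using t by (intro pic_diff) auto
    also have "\<dots> \<le> (2*cF)^(Suc k) * N^(Suc k) / fact (Suc k)"
      using t cF_pos by (intro divide_right_mono mult_left_mono power_mono) auto
    finally show "norm (pic \<nu> (Suc k) t - pic \<nu> k t) \<le> (2*cF)^(Suc k) * N^(Suc k) / fact (Suc k)" .
  qed
  have "uniform_limit {0..N} (\<lambda>k t. \<nu> + (\<Sum>i<k. pic \<nu> (Suc i) t - pic \<nu> i t)) (solG \<nu>) sequentially"
    unfolding solG_def by (rule uniform_limit_add[OF uniform_limit_const u])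
  moreover have "(\<lambda>k t. \<nu> + (\<Sum>i<k. pic \<nu> (Suc i) t - pic \<nu> i t)) = pic \<nu>"
  proof (intro ext)
    fix k t
    have "(\<Sum>i<k. pic \<nu> (Suc i) t - pic \<nu> i t) = pic \<nu> k t - pic \<nu> 0 t"
      by (rule sum_lessThan_telescope)
    then show "\<nu> + (\<Sum>i<k. pic \<nu> (Suc i) t - pic \<nu> i t) = pic \<nu> k t" by simp
  qed
  ultimately show ?thesis by simp
qed

lemma solG_neg: "t \<le> 0 \<Longrightarrow> solG \<nu> t = \<nu>"
  by (simp add: solG_def pic_neg)

lemma solG_cont: "continuous_on UNIV (solG \<nu>)"
proof (rule cont_glue)
  fix N :: real
  show "continuous_on {0..N} (solG \<nu>)"
    by (rule uniform_limit_theorem[OF _ pic_ulim])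
      (auto intro: always_eventually continuous_on_subset[OF pic_cont])
qed (simp add: solG_neg)

lemma solG_meas: "solG \<nu> \<in> borel_measurable lebesgue"
  by (rule cont_meas_leb[OF solG_cont])

lemma solG_eqG:
  assumes t: "0 \<le> t"
  shows "((\<lambda>s. G (solG \<nu> s) s) has_integral (solG \<nu> t - \<nu>)) {0..t}"
proof -
  define I where "I = integral {0..t} (\<lambda>s. G (solG \<nu> s) s)"
  have intS: "(\<lambda>s. G (solG \<nu> s) s) integrable_on {0..t}" by (rule G_int[OF solG_meas])
  have "(\<lambda>k. pic \<nu> (Suc k) t) \<longlonglongrightarrow> \<nu> + I"
  proof (rule tendstoI)
    fix e :: real assume e: "0 < e"
    define e' where "e' = e / (2*cF*t + 1)"
    have tpos: "0 < 2*cF*t + 1" using cF_pos t by (simp add: add_nonneg_pos)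
    have e': "0 < e'" unfolding e'_def using e tpos by simp
    have ev: "\<forall>\<^sub>F k in sequentially. \<forall>s\<in>{0..t}. dist (pic \<nu> k s) (solG \<nu> s) < e'"
      by (rule uniform_limitD[OF pic_ulim e'])
    show "\<forall>\<^sub>F k in sequentially. dist (pic \<nu> (Suc k) t) (\<nu> + I) < e"
      using ev
    proof eventually_elim
      case (elim k)
      have "dist (pic \<nu> (Suc k) t) (\<nu> + I) = norm (integral {0..t} (\<lambda>s. G (pic \<nu> k s) s - G (solG \<nu> s) s))"
        by (simp add: pic_Suc dist_norm I_def integral_diff[OF pic_int intS])
      also have "\<dots> \<le> integral {0..t} (\<lambda>_. 2*cF*e')"
      proof (rule integral_norm_bound_integral)
        show "(\<lambda>s. G (pic \<nu> k s) s - G (solG \<nu> s) s) integrable_on {0..t}"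
          by (intro integrable_diff pic_int intS)
        fix s assume "s \<in> {0..t}"
        then have "norm (pic \<nu> k s - solG \<nu> s) \<le> e'" using elim by (auto simp: dist_norm less_imp_le)
        then have "2*cF * norm (pic \<nu> k s - solG \<nu> s) \<le> 2*cF*e'"
          using cF_pos by (intro mult_left_mono) auto
        then show "norm (G (pic \<nu> k s) s - G (solG \<nu> s) s) \<le> 2*cF*e'"
          using G_lip[of "pic \<nu> k s" s "solG \<nu> s"] by linarith
      qed (rule integrable_const_ivl)
      also have "\<dots> = t * (2*cF*e')" using t by simp
      also have "\<dots> < e"
      proof -
        have "t * (2*cF*e') = e * (2*cF*t) / (2*cF*t + 1)" unfolding e'_def by (simp add: field_simps)
        also have "\<dots> < e" using e tpos by (simp add: field_simps)
        finally show ?thesis .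
      qed
      finally show ?case .
    qed
  qed
  moreover have "(\<lambda>k. pic \<nu> (Suc k) t) \<longlonglongrightarrow> solG \<nu> t"
    using LIMSEQ_Suc[OF tendsto_uniform_limitI[OF pic_ulim[where N=t and \<nu>=\<nu>], of t]] t by simp
  ultimately have "solG \<nu> t = \<nu> + I" using LIMSEQ_unique by blast
  then show ?thesis using intS unfolding I_def by (simp add: integrable_integral)
qed

end

lemma has_integral_nth: "(f has_integral I) S \<Longrightarrow> ((\<lambda>s. f s $ j) has_integral I $ j) S"
  using has_integral_linear[OF _ bounded_linear_vec_nth, of f I S j] by (simp add: o_def)

lemma Fvf_nth: "Fvf lam h a p u $ j = (if h j = a then muLam lam p u $ j - muLam1 lam h p u a * p$j else 0)"
  by (simp add: Fvf_def)

lemma Fvf_sum: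
  assumes "p \<in> Delta h a"
  shows "(\<Sum>j\<in>UNIV. Fvf lam h a p u $ j) = 0"
proof -
  have "(\<Sum>j\<in>UNIV. Fvf lam h a p u $ j) = (\<Sum>j\<in>{j. h j = a}. muLam lam p u $ j - muLam1 lam h p u a * p$j)"
    unfolding Fvf_nth by (simp add: sum.If_cases Int_def)
  also have "\<dots> = (\<Sum>j\<in>{j. h j = a}. muLam lam p u $ j) - muLam1 lam h p u a * (\<Sum>j\<in>{j. h j = a}. p$j)"
    by (simp add: sum_subtractf sum_distrib_left)
  also have "(\<Sum>j\<in>{j. h j = a}. muLam lam p u $ j) = muLam1 lam h p u a"
    unfolding muLam_def muLam1_def by (simp add: sum.swap[of _ "{j. h j = a}"])
  finally show ?thesis using Delta_class_sum[OF assms] by simp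
qed

lemma closest_Delta_le:
  fixes z :: "real^'i::finite"
  assumes ne: "Delta h a \<noteq> {}" and zs: "(\<Sum>j\<in>UNIV. z$j) = 1" and zo: "\<And>j. h j \<noteq> a \<Longrightarrow> z$j = 0"
    and pk: "0 < closest_point (Delta h a) z $ k"
  shows "closest_point (Delta h a) z $ k \<le> z $ k"
proof (rule ccontr)
  define p where "p = closest_point (Delta h a) z"
  have pD: "p \<in> Delta h a" unfolding p_def by (rule closest_point_in_set[OF closed_Delta ne])
  assume "\<not> closest_point (Delta h a) z $ k \<le> z $ k"
  then have zk: "z$k < p$k" by (simp add: p_def)
  have hk: "h k = a" using pk pD by (auto simp: p_def Delta_def)
  have "\<exists>m. p$m < z$m"
  proof (rule ccontr)
    assume "\<not> (\<exists>m. p$m < z$m)"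
    then have "(\<Sum>j\<in>UNIV. z$j) < (\<Sum>j\<in>UNIV. p$j)"
      using zk by (intro sum_strict_mono_ex1) (auto simp: not_less)
    then show False using zs pD by (simp add: Delta_def)
  qed
  then obtain m where zm: "p$m < z$m" by blast
  have mk: "m \<noteq> k" using zm zk by auto
  have hm: "h m = a" using zm zo[of m] pD by (cases "h m = a") (auto simp: Delta_def)
  define d where "d = (z$m - p$m) + (p$k - z$k)"
  have d0: "0 < d" unfolding d_def using zm zk by simp
  define e where "e = min (p$k) (d/2)"
  have e0: "0 < e" unfolding e_def using pk d0 by (simp add: p_def)
  define v :: "real^'i" where "v = axis m 1 - axis k 1"
  define y where "y = p + e *\<^sub>R v"
  have ycomp: "y$i = p$i + (if i = m then e else 0) - (if i = k then e else 0)" for i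
    unfolding y_def v_def by (simp add: axis_def)
  have yD: "y \<in> Delta h a"
  proof -
    have "0 \<le> y$i" for i
    proof -
      have "0 \<le> p$i" using pD by (simp add: Delta_def)
      moreover have "e \<le> p$k" unfolding e_def by simp
      ultimately show ?thesis unfolding ycomp using e0 mk by auto
    qed
    moreover have "(\<Sum>i\<in>UNIV. y$i) = 1"
    proof -
      have "(\<Sum>i\<in>UNIV. y$i) = (\<Sum>i\<in>UNIV. p$i) + (\<Sum>i\<in>UNIV. (if i = m then e else 0)) - (\<Sum>i\<in>UNIV. (if i = k then e else 0))"
        unfolding ycomp by (simp add: sum.distrib sum_subtractf)
      then show ?thesis using pD by (simp add: Delta_def)
    qed
    moreover have "h i \<noteq> a \<Longrightarrow> y$i = 0" for i
      using pD hm hk unfolding ycomp by (auto simp: Delta_def)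
    ultimately show ?thesis by (simp add: Delta_def)
  qed
  have wv: "inner (z - p) v = d"
    unfolding v_def d_def by (simp add: inner_diff_right inner_axis)
  have vv: "inner v v = 2"
    unfolding v_def using mk by (simp add: inner_diff_left inner_diff_right inner_axis_axis)
  have "(norm (z - y))^2 = (norm (z - p))^2 - 2 * e * d + e^2 * 2"
  proof -
    have zy: "z - y = (z - p) - e *\<^sub>R v" by (simp add: y_def algebra_simps)
    have "(norm (z - y))^2 = inner ((z - p) - e *\<^sub>R v) ((z - p) - e *\<^sub>R v)"
      unfolding zy[symmetric] by (simp add: power2_norm_eq_inner)
    also have "\<dots> = inner (z - p) (z - p) - 2 * e * inner (z - p) v + e^2 * inner v v"
      by (simp add: inner_diff_left inner_diff_right inner_commute power2_eq_square algebra_simps)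
    finally show ?thesis by (simp add: wv vv power2_norm_eq_inner)
  qed
  moreover have "2 * e * d - e^2 * 2 > 0"
  proof -
    have "e \<le> d/2" unfolding e_def by simp
    then have "e < d" using d0 by simp
    then show ?thesis using e0 by (simp add: power2_eq_square algebra_simps mult_strict_left_mono)
  qed
  ultimately have "(norm (z - y))^2 < (norm (z - p))^2" by simp
  then have "norm (z - y) < norm (z - p)" by (simp add: power_less_imp_less_base)
  moreover have "dist z p \<le> dist z y"
    unfolding p_def by (rule closest_point_le[OF closed_Delta yD])
  ultimately show False by (simp add: dist_norm)
qed


context odeB begin

lemma solG_off:
  assumes "\<nu> \<in> Delta h a" "h j \<noteq> a" shows "solG \<nu> t $ j = 0"
proof (cases "t \<le> 0")
  case True then show ?thesis using assms by (simp add: solG_neg Delta_def)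
next
  case False
  have "((\<lambda>s. G (solG \<nu> s) s $ j) has_integral (solG \<nu> t - \<nu>) $ j) {0..t}"
    by (rule has_integral_nth[OF solG_eqG]) (use False in auto)
  moreover have "G x s $ j = 0" for x s using assms(2) by (simp add: G_def F_def Fvf_nth)
  ultimately have "(solG \<nu> t - \<nu>) $ j = 0" by (simp add: has_integral_0_eq)
  then show ?thesis using assms by (simp add: Delta_def)
qed

lemma solG_sum:
  assumes "\<nu> \<in> Delta h a" shows "(\<Sum>j\<in>UNIV. solG \<nu> t $ j) = 1"
proof (cases "t \<le> 0")
  case True then show ?thesis using assms by (simp add: solG_neg Delta_def)
next
  case False
  have "((\<lambda>s. \<Sum>j\<in>UNIV. G (solG \<nu> s) s $ j) has_integral (\<Sum>j\<in>UNIV. (solG \<nu> t - \<nu>) $ j)) {0..t}"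
    by (intro has_integral_sum finite_UNIV ballI has_integral_nth[OF solG_eqG]) (use False in auto)
  moreover have "(\<Sum>j\<in>UNIV. G x s $ j) = 0" for x s
    unfolding G_def F_def by (rule Fvf_sum[OF Pj_in])
  ultimately have "(\<Sum>j\<in>UNIV. (solG \<nu> t - \<nu>) $ j) = 0" by (simp add: has_integral_0_eq)
  then show ?thesis using assms by (simp add: sum_subtractf Delta_def)
qed

lemma G_nth_nonneg:
  assumes xs: "(\<Sum>j\<in>UNIV. x$j) = 1" and xo: "\<And>j. h j \<noteq> a \<Longrightarrow> x$j = 0" and xk: "x$k < 0"
  shows "0 \<le> G x s $ k"
proof -
  define p where "p = Pj x"
  have pD: "p \<in> Delta h a" unfolding p_def by (rule Pj_in)
  have pk: "p$k = 0"
  proof (rule ccontr)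
    assume "p$k \<noteq> 0"
    then have "0 < p$k" using Delta_comp(1)[OF pD, of k] by simp
    then have "p$k \<le> x$k" unfolding p_def Pj_def
      by (intro closest_Delta_le[where h=h and a=a and z=x and k=k]) (use Dne xs xo in auto)
    then show False using \<open>0 < p$k\<close> xk by simp
  qed
  have "0 \<le> muLam lamE p (B s) $ k"
    unfolding muLam_def
  proof (simp, rule sum_nonneg)
    fix i
    show "0 \<le> p$i * lamE (B s) i k"
    proof (cases "i = k")
      case True then show ?thesis using pk by simp
    next
      case False then show ?thesis using pD Boff[OF False, of s] by (simp add: Delta_def)
    qed
  qed
  then show ?thesis unfolding G_def F_def Fvf_nth p_def[symmetric] using pk by simp
qed

lemma solG_nonneg:
  assumes nD: "\<nu> \<in> Delta h a" shows "0 \<le> solG \<nu> t $ k"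
proof (rule ccontr)
  let ?z = "solG \<nu>"
  assume "\<not> 0 \<le> ?z t $ k"
  then have ztk: "?z t $ k < 0" by simp
  have t0: "0 < t"
  proof (rule ccontr)
    assume "\<not> 0 < t"
    then have "?z t = \<nu>" by (simp add: solG_neg)
    then show False using ztk Delta_comp(1)[OF nD, of k] by simp
  qed
  have zc: "continuous_on UNIV (\<lambda>s. ?z s $ k)" by (intro continuous_on_component solG_cont)
  define S where "S = {s. 0 \<le> s} \<inter> {s. s \<le> t} \<inter> {s. 0 \<le> ?z s $ k}"
  have "closed {s. 0 \<le> ?z s $ k}" by (rule closed_Collect_le) (auto intro: zc)
  then have cS: "closed S" unfolding S_def
    by (intro closed_Int) (auto intro: closed_Collect_le continuous_intros)
  have "0 \<in> S" using nD t0 by (simp add: S_def solG_neg Delta_def)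
  then have Sne: "S \<noteq> {}" by auto
  have bS: "bdd_above S" unfolding S_def by (auto intro: bdd_aboveI[of _ t])
  define t1 where "t1 = Sup S"
  have t1S: "t1 \<in> S" unfolding t1_def by (rule closed_contains_Sup[OF Sne bS cS])
  have t1t: "t1 < t"
  proof -
    have "t1 \<le> t" using t1S by (simp add: S_def)
    moreover have "t1 \<noteq> t" using t1S ztk by (auto simp: S_def)
    ultimately show ?thesis by simp
  qed
  have neg: "?z s $ k < 0" if "s \<in> {t1<..t}" for s
  proof (rule ccontr)
    assume "\<not> ?z s $ k < 0"
    then have "s \<in> S" using that t1S by (auto simp: S_def)
    then have "s \<le> t1" unfolding t1_def by (rule cSup_upper[OF _ bS])
    then show False using that by simp
  qed
  have t10: "0 \<le> t1" using t1S by (simp add: S_def)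
  define g where "g s = G (?z s) s $ k" for s
  have gt: "(g has_integral (?z t - \<nu>) $ k) {0..t}"
    unfolding g_def by (rule has_integral_nth[OF solG_eqG]) (use t0 in auto)
  have gt1: "(g has_integral (?z t1 - \<nu>) $ k) {0..t1}"
    unfolding g_def by (rule has_integral_nth[OF solG_eqG[OF t10]])
  have gint: "g integrable_on {0..t}" using gt by blast
  have comb: "integral {0..t1} g + integral {t1..t} g = integral {0..t} g"
    by (rule Henstock_Kurzweil_Integration.integral_combine[OF t10 less_imp_le[OF t1t] gint])
  define g' where "g' s = (if s = t1 then 0 else g s)" for s
  have gi: "g integrable_on {t1..t}"
    by (rule integrable_subinterval_real[OF gint]) (use t10 in auto)
  have g'i: "g' integrable_on {t1..t}"
    by (rule integrable_spike[OF gi negligible_sing[of t1]]) (simp add: g'_def)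
  have eqi: "integral {t1..t} g = integral {t1..t} g'"
    by (rule integral_spike[of "{t1}"]) (auto simp: g'_def)
  have "0 \<le> integral {t1..t} g'"
  proof (rule integral_nonneg[OF g'i])
    fix s assume s: "s \<in> {t1..t}"
    show "0 \<le> g' s"
    proof (cases "s = t1")
      case True then show ?thesis by (simp add: g'_def)
    next
      case False
      then have "s \<in> {t1<..t}" using s by auto
      then have "?z s $ k < 0" by (rule neg)
      then show ?thesis unfolding g'_def g_def using False
        by (simp, intro G_nth_nonneg solG_sum[OF nD] solG_off[OF nD]) auto
    qed
  qed
  then have "(?z t1 - \<nu>) $ k \<le> (?z t - \<nu>) $ k"
    using comb eqi integral_unique[OF gt] integral_unique[OF gt1] by linarith
  then have "?z t1 $ k \<le> ?z t $ k" by simp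
  moreover have "0 \<le> ?z t1 $ k" using t1S by (simp add: S_def)
  ultimately show False using ztk by simp
qed

lemma solG_in: "\<nu> \<in> Delta h a \<Longrightarrow> solG \<nu> t \<in> Delta h a"
  using solG_nonneg solG_sum solG_off by (simp add: Delta_def)

lemma solG_eqF:
  assumes "\<nu> \<in> Delta h a" "0 \<le> t"
  shows "((\<lambda>s. F (solG \<nu> s) s) has_integral (solG \<nu> t - \<nu>)) {0..t}"
proof -
  have "(\<lambda>s. G (solG \<nu> s) s) = (\<lambda>s. F (solG \<nu> s) s)"
    by (rule ext) (simp add: G_def Pj_id[OF solG_in[OF assms(1)]])
  then show ?thesis using solG_eqG[OF assms(2), of \<nu>] by simp
qed

end

lemma exp_neg_lip:
  fixes x y :: real assumes "0 \<le> x" "0 \<le> y"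
  shows "\<bar>exp (- x) - exp (- y)\<bar> \<le> \<bar>x - y\<bar>"
proof -
  have *: "exp (- x) - exp (- y) \<le> y - x" if "0 \<le> x" "x \<le> y" for x y :: real
  proof -
    have e: "exp (- y) = exp (- x) * exp (- (y - x))" by (simp add: exp_add[symmetric])
    have a: "1 - exp (- (y - x)) \<le> y - x" using exp_ge_add_one_self[of "- (y - x)"] by linarith
    have "exp (- x) - exp (- y) = exp (- x) * (1 - exp (- (y - x)))" by (simp add: e algebra_simps)
    also have "\<dots> \<le> exp (- x) * (y - x)" by (intro mult_left_mono a) simp
    also have "\<dots> \<le> 1 * (y - x)" using that by (intro mult_right_mono) auto
    finally show ?thesis by simp
  qed
  show ?thesis
  proof (cases "x \<le> y")
    case True
    then have "exp (- y) \<le> exp (- x)" by simp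
    then show ?thesis using *[OF assms(1) True] True by simp
  next
    case False
    then have "exp (- x) \<le> exp (- y)" by simp
    then show ?thesis using *[OF assms(2)] False by simp
  qed
qed

context odeB begin

lemma sol_unique:
  assumes nD: "\<nu> \<in> Delta h a" and zneg: "\<forall>t<0. z t = \<nu>"
    and zeq: "\<forall>t\<ge>0. ((\<lambda>s. F (z s) s) has_integral (z t - \<nu>)) {0..t}"
  shows "z = solG \<nu>"
proof (rule ext)
  fix T :: real
  show "z T = solG \<nu> T"
  proof (cases "T < 0")
    case True then show ?thesis using zneg by (simp add: solG_neg)
  next
    case False
    then have T0: "0 \<le> T" by simp
    define f where "f s = F (z s) s" for s
    have fT: "f integrable_on {0..T}" using zeq T0 unfolding f_def by blast
    have zval: "z s = \<nu> + integral {0..s} f" if "0 \<le> s" for s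
      using integral_unique[OF zeq[rule_format, OF that]] unfolding f_def by simp
    have zc: "continuous_on {0..T} z"
    proof -
      have "continuous_on {0..T} (\<lambda>s. \<nu> + integral {0..s} f)"
        by (intro continuous_intros indefinite_integral_continuous_1 fT)
      then show ?thesis by (rule continuous_on_eq) (simp add: zval)
    qed
    have "bounded (z ` {0..T})" by (intro compact_imp_bounded compact_continuous_image zc) simp
    then obtain R0 where "\<forall>x\<in>z ` {0..T}. norm x \<le> R0" unfolding bounded_iff by blast
    then have R0: "\<And>s. s \<in> {0..T} \<Longrightarrow> norm (z s) \<le> R0" by auto
    define R where "R = max R0 0"
    have R: "0 \<le> R" "\<And>s i. s \<in> {0..T} \<Longrightarrow> \<bar>z s $ i\<bar> \<le> R"
    proof -
      show "0 \<le> R" unfolding R_def by simp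
      fix s i assume s: "s \<in> {0..T}"
      have "\<bar>z s $ i\<bar> \<le> norm (z s)" by (rule component_le_norm_cart)
      also have "\<dots> \<le> R0" by (rule R0[OF s])
      also have "R0 \<le> R" unfolding R_def by simp
      finally show "\<bar>z s $ i\<bar> \<le> R" .
    qed
    define g where "g s = norm (z s - solG \<nu> s)" for s
    have gc: "continuous_on {0..T} g"
      unfolding g_def by (intro continuous_intros zc continuous_on_subset[OF solG_cont]) auto
    define K where "K = cF * (R + 1)"
    have K0: "0 \<le> K" unfolding K_def using cF_pos R by simp
    have "g s \<le> K * integral {0..s} g" if s: "s \<in> {0..T}" for s
    proof -
      have s0: "0 \<le> s" using s by simp
      have fs: "(f has_integral (z s - \<nu>)) {0..s}" using zeq s0 unfolding f_def by blast
      have hs: "((\<lambda>r. F (solG \<nu> r) r) has_integral (solG \<nu> s - \<nu>)) {0..s}" by (rule solG_eqF[OF nD s0])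
      have "z s - solG \<nu> s = integral {0..s} (\<lambda>r. f r - F (solG \<nu> r) r)"
        using integral_unique[OF has_integral_diff[OF fs hs]] by simp
      then have "g s = norm (integral {0..s} (\<lambda>r. f r - F (solG \<nu> r) r))" by (simp add: g_def)
      also have "\<dots> \<le> integral {0..s} (\<lambda>r. K * g r)"
      proof (rule integral_norm_bound_integral)
        show "(\<lambda>r. f r - F (solG \<nu> r) r) integrable_on {0..s}"
          using fs hs by (intro integrable_diff) auto
        show "(\<lambda>r. K * g r) integrable_on {0..s}"
          by (intro integrable_continuous_interval continuous_intros continuous_on_subset[OF gc]) (use s in auto)
        fix r assume r: "r \<in> {0..s}"
        then have rT: "r \<in> {0..T}" using s by auto
        show "norm (f r - F (solG \<nu> r) r) \<le> K * g r"
          unfolding f_def g_def K_def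
          by (rule F_lip) (use R rT Delta_comp(3)[OF solG_in[OF nD]] in auto)
      qed
      also have "\<dots> = K * integral {0..s} g" by simp
      finally show ?thesis .
    qed
    then have "g T = 0"
      by (intro gronwall0[OF gc K0]) (use T0 in \<open>auto simp: g_def\<close>)
    then show ?thesis by (simp add: g_def)
  qed
qed

lemma phi_eq: assumes "\<nu> \<in> Delta h a" shows "phi lamE h a B \<nu> = solG \<nu>"
  unfolding phi_def
proof (rule the_equality)
  show "(\<forall>t<0. solG \<nu> t = \<nu>) \<and> (\<forall>t\<ge>0. ((\<lambda>s. Fvf lamE h a (solG \<nu> s) (B s)) has_integral solG \<nu> t - \<nu>) {0..t})"
    using solG_eqF[OF assms] by (simp add: solG_neg F_def)
  fix z assume "(\<forall>t<0. z t = \<nu>) \<and> (\<forall>t\<ge>0. ((\<lambda>s. Fvf lamE h a (z s) (B s)) has_integral z t - \<nu>) {0..t})"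
  then show "z = solG \<nu>" using sol_unique[OF assms, of z] by (simp add: F_def)
qed

lemma sol_lip:
  assumes nD: "\<nu> \<in> Delta h a" and rD: "\<rho> \<in> Delta h a" and t: "0 \<le> t"
  shows "norm (solG \<nu> t - solG \<rho> t) \<le> norm (\<nu> - \<rho>) * exp (2 * cF * t)"
proof -
  define g where "g s = norm (solG \<nu> s - solG \<rho> s)" for s
  have gc: "continuous_on {0..t} g"
    unfolding g_def by (intro continuous_intros continuous_on_subset[OF solG_cont]) auto
  have "g s \<le> norm (\<nu> - \<rho>) + 2 * cF * integral {0..s} g" if s: "s \<in> {0..t}" for s
  proof -
    have s0: "0 \<le> s" using s by simp
    have hn: "((\<lambda>r. F (solG \<nu> r) r) has_integral (solG \<nu> s - \<nu>)) {0..s}" by (rule solG_eqF[OF nD s0])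
    have hr: "((\<lambda>r. F (solG \<rho> r) r) has_integral (solG \<rho> s - \<rho>)) {0..s}" by (rule solG_eqF[OF rD s0])
    have "solG \<nu> s - solG \<rho> s = (\<nu> - \<rho>) + integral {0..s} (\<lambda>r. F (solG \<nu> r) r - F (solG \<rho> r) r)"
      using integral_unique[OF has_integral_diff[OF hn hr]] by (simp add: algebra_simps)
    then have "g s = norm ((\<nu> - \<rho>) + integral {0..s} (\<lambda>r. F (solG \<nu> r) r - F (solG \<rho> r) r))"
      unfolding g_def by simp
    also have "\<dots> \<le> norm (\<nu> - \<rho>) + norm (integral {0..s} (\<lambda>r. F (solG \<nu> r) r - F (solG \<rho> r) r))"
      by (rule norm_triangle_ineq)
    also have "norm (integral {0..s} (\<lambda>r. F (solG \<nu> r) r - F (solG \<rho> r) r)) \<le> integral {0..s} (\<lambda>r. 2 * cF * g r)"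
    proof (rule integral_norm_bound_integral)
      show "(\<lambda>r. F (solG \<nu> r) r - F (solG \<rho> r) r) integrable_on {0..s}"
        using hn hr by (intro integrable_diff) auto
      show "(\<lambda>r. 2 * cF * g r) integrable_on {0..s}"
        by (intro integrable_continuous_interval continuous_intros continuous_on_subset[OF gc]) (use s in auto)
      fix r assume "r \<in> {0..s}"
      show "norm (F (solG \<nu> r) r - F (solG \<rho> r) r) \<le> 2 * cF * g r"
        unfolding g_def by (rule F_lipD[OF solG_in[OF nD] solG_in[OF rD]])
    qed
    also have "integral {0..s} (\<lambda>r. 2 * cF * g r) = 2 * cF * integral {0..s} g" by simp
    finally show ?thesis by simp
  qed
  then have "g t \<le> norm (\<nu> - \<rho>) * exp (2 * cF * t)"
    by (intro gronwall[OF gc]) (use t cF_pos in auto)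
  then show ?thesis by (simp add: g_def)
qed

end

lemma cont_rr_lamE: "continuous_on UNIV (\<lambda>x. rr lamE h a (fst x) (snd x))"
  unfolding rr_def muLam1_def lamE_def by (intro continuous_intros)

lemma sum_split_class:
  fixes f :: "'i::finite \<Rightarrow> real"
  shows "(\<Sum>j\<in>UNIV. f j) = (\<Sum>j\<in>{j. h j = a}. f j) + (\<Sum>j\<in>{j. h j \<noteq> a}. f j)"
  by (subst sum.union_disjoint[symmetric]) (auto intro: sum.cong)

context odeB begin

lemma rr_nonneg:
  assumes "p \<in> Delta h a" shows "0 \<le> rr lamE h a p (B s)"
proof -
  have "muLam1 lamE h p (B s) a = (\<Sum>i\<in>UNIV. p$i * (\<Sum>j\<in>{j. h j = a}. lamE (B s) i j))"
    unfolding muLam1_def by (simp add: sum_distrib_left)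
  also have "\<dots> = (\<Sum>i\<in>UNIV. - (p$i * (\<Sum>j\<in>{j. h j \<noteq> a}. lamE (B s) i j)))"
  proof (rule sum.cong)
    fix i
    have "(\<Sum>j\<in>{j. h j = a}. lamE (B s) i j) = - (\<Sum>j\<in>{j. h j \<noteq> a}. lamE (B s) i j)"
      using sum_split_class[of "lamE (B s) i" h a] Brow[of s i] by simp
    then show "p$i * (\<Sum>j\<in>{j. h j = a}. lamE (B s) i j) = - (p$i * (\<Sum>j\<in>{j. h j \<noteq> a}. lamE (B s) i j))"
      by simp
  qed simp
  also have "\<dots> \<le> 0"
  proof (rule sum_nonpos)
    fix i
    show "- (p$i * (\<Sum>j\<in>{j. h j \<noteq> a}. lamE (B s) i j)) \<le> 0"
    proof (cases "h i = a")
      case True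
      have "0 \<le> (\<Sum>j\<in>{j. h j \<noteq> a}. lamE (B s) i j)"
        by (rule sum_nonneg) (metis Boff True mem_Collect_eq)
      then show ?thesis using Delta_comp(1)[OF assms, of i] by simp
    next
      case False then show ?thesis using assms by (simp add: Delta_def)
    qed
  qed
  finally show ?thesis by (simp add: rr_def)
qed

definition "cR = real CARD('i) * real CARD('i) * Lm"

lemma cR0: "0 \<le> cR" unfolding cR_def using Lm0 by simp

lemma rr_lip: "\<bar>rr lamE h a p (B s) - rr lamE h a q (B s)\<bar> \<le> cR * norm (p - q)"
proof -
  have "\<bar>muLam1 lamE h (p - q) (B s) a\<bar> \<le> cR * norm (p - q)"
    unfolding cR_def by (rule muLam1_bound[where lam=lamE and u="B s" and p="p - q" and R="norm (p - q)", OF Bbnd component_le_norm_cart Lm0 norm_ge_zero])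
  then show ?thesis by (simp add: rr_def muLam1_linear abs_minus_commute)
qed

lemma rr_bnd: assumes "p \<in> Delta h a" shows "\<bar>rr lamE h a p (B s)\<bar> \<le> cR"
proof -
  have "\<bar>muLam1 lamE h p (B s) a\<bar> \<le> cR * 1"
    unfolding cR_def by (rule muLam1_bound[where lam=lamE and u="B s" and p=p and R=1, OF Bbnd Delta_comp(3)[OF assms] Lm0]) simp
  then show ?thesis by (simp add: rr_def)
qed

definition "rS \<nu> s = rr lamE h a (solG \<nu> s) (B s)"

lemma rS_meas: "rS \<nu> \<in> borel_measurable lebesgue"
proof -
  have "(\<lambda>s. (solG \<nu> s, B s)) \<in> borel_measurable lebesgue"
    using solG_meas Bmeas by (rule borel_measurable_Pair)
  from meas_cont_comp[OF cont_rr_lamE this, of h a] show ?thesis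
    by (simp add: rS_def[abs_def])
qed

lemma rS_int: assumes "\<nu> \<in> Delta h a" shows "rS \<nu> integrable_on {c..d}"
  by (rule integrable_bounded_meas[where C=cR, OF rS_meas]) (simp add: rS_def rr_bnd[OF solG_in[OF assms]])

lemma chi_eq: assumes "\<nu> \<in> Delta h a"
  shows "chi lamE h a B \<nu> t = exp (- integral {0..t} (rS \<nu>))"
  by (simp add: chi_def phi_eq[OF assms] rS_def[abs_def])

lemma chi_cont: assumes "\<nu> \<in> Delta h a" shows "continuous_on UNIV (chi lamE h a B \<nu>)"
proof -
  have c: "continuous_on UNIV (\<lambda>t. integral {0..t} (rS \<nu>))"
    using indef_cont[OF rS_int[OF assms], of 0] by simp
  have "continuous_on UNIV (\<lambda>t. exp (- (integral {0..t} (rS \<nu>))))" by (intro continuous_intros c)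
  moreover have "chi lamE h a B \<nu> = (\<lambda>t. exp (- (integral {0..t} (rS \<nu>))))"
    by (rule ext) (rule chi_eq[OF assms])
  ultimately show ?thesis by simp
qed

lemma int_rS_nonneg: assumes "\<nu> \<in> Delta h a" shows "0 \<le> integral {0..t} (rS \<nu>)"
  by (rule integral_nonneg[OF rS_int[OF assms]]) (simp add: rS_def rr_nonneg[OF solG_in[OF assms]])

lemma chi_range: assumes "\<nu> \<in> Delta h a" shows "0 \<le> chi lamE h a B \<nu> t" "chi lamE h a B \<nu> t \<le> 1"
  using int_rS_nonneg[OF assms, of t] by (simp_all add: chi_eq[OF assms])

lemma chi_lip:
  assumes nD: "\<nu> \<in> Delta h a" and rD: "\<rho> \<in> Delta h a" and t: "t \<in> {0..T}"
  shows "\<bar>chi lamE h a B \<nu> t - chi lamE h a B \<rho> t\<bar> \<le> cR * T * exp (2 * cF * T) * norm (\<nu> - \<rho>)"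
proof -
  have "\<bar>chi lamE h a B \<nu> t - chi lamE h a B \<rho> t\<bar> \<le> \<bar>integral {0..t} (rS \<nu>) - integral {0..t} (rS \<rho>)\<bar>"
    unfolding chi_eq[OF nD] chi_eq[OF rD] by (rule exp_neg_lip[OF int_rS_nonneg[OF nD] int_rS_nonneg[OF rD]])
  also have "\<dots> = \<bar>integral {0..t} (\<lambda>s. rS \<nu> s - rS \<rho> s)\<bar>"
    by (simp add: integral_diff[OF rS_int[OF nD] rS_int[OF rD]])
  also have "\<dots> = norm (integral {0..t} (\<lambda>s. rS \<nu> s - rS \<rho> s))" by simp
  also have "\<dots> \<le> integral {0..t} (\<lambda>_. cR * norm (\<nu> - \<rho>) * exp (2 * cF * T))"
  proof (rule integral_norm_bound_integral)
    show "(\<lambda>s. rS \<nu> s - rS \<rho> s) integrable_on {0..t}" by (intro integrable_diff rS_int nD rD)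
    fix s assume s: "s \<in> {0..t}"
    have "\<bar>rS \<nu> s - rS \<rho> s\<bar> \<le> cR * norm (solG \<nu> s - solG \<rho> s)" unfolding rS_def by (rule rr_lip)
    also have "\<dots> \<le> cR * (norm (\<nu> - \<rho>) * exp (2 * cF * s))"
      using s by (intro mult_left_mono sol_lip nD rD cR0) auto
    also have "\<dots> \<le> cR * (norm (\<nu> - \<rho>) * exp (2 * cF * T))"
      using s t cF_pos by (intro mult_left_mono cR0) auto
    finally show "norm (rS \<nu> s - rS \<rho> s) \<le> cR * norm (\<nu> - \<rho>) * exp (2 * cF * T)" by (simp add: algebra_simps)
  qed (rule integrable_const_ivl)
  also have "\<dots> = t * (cR * norm (\<nu> - \<rho>) * exp (2 * cF * T))" using t by simp
  also have "\<dots> \<le> T * (cR * norm (\<nu> - \<rho>) * exp (2 * cF * T))"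
    using t cR0 by (intro mult_right_mono) auto
  finally show ?thesis by (simp add: algebra_simps)
qed

lemma sol_lipT:
  assumes nD: "\<nu> \<in> Delta h a" and rD: "\<rho> \<in> Delta h a" and t: "t \<in> {0..T}"
  shows "norm (solG \<nu> t - solG \<rho> t) \<le> exp (2 * cF * T) * norm (\<nu> - \<rho>)"
proof -
  have "norm (solG \<nu> t - solG \<rho> t) \<le> norm (\<nu> - \<rho>) * exp (2 * cF * t)"
    using t by (intro sol_lip nD rD) auto
  also have "\<dots> \<le> norm (\<nu> - \<rho>) * exp (2 * cF * T)"
    using t cF_pos by (intro mult_left_mono) auto
  finally show ?thesis by (simp add: algebra_simps)
qed

end

definition goodU :: "(real^'i^'i) \<times> (real^'i) \<Rightarrow> bool" where
  "goodU u \<longleftrightarrow> (\<forall>i j. i \<noteq> j \<longrightarrow> 0 \<le> lamE u i j) \<and> (\<forall>i. (\<Sum>j\<in>UNIV. lamE u i j) = 0)"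

definition PsiE :: "('i::finite \<Rightarrow> 'o::finite) \<Rightarrow> ('o \<Rightarrow> real^'i) \<Rightarrow> (real^'i \<Rightarrow> real) \<Rightarrow> 'o
    \<Rightarrow> (real^'i) \<times> (real \<times> ((real^'i^'i) \<times> (real^'i))) \<Rightarrow> real" where
  "PsiE h nu0 w a x = fst (snd x) * ((\<Sum>i\<in>UNIV. fst x $ i * fE i (snd (snd x))) +
     (\<Sum>b\<in>UNIV. if b = a then 0 else w (Hb h nu0 b (muLam lamE (fst x) (snd (snd x)))) * muLam1 lamE h (fst x) (snd (snd x)) b))"

lemma muLam1_eq: "muLam1 lam h p u b = (\<Sum>j\<in>{j. h j = b}. muLam lam p u $ j)"
  unfolding muLam_def muLam1_def by (simp add: sum.swap[of _ "{j. h j = b}"])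

lemma muLam_nonneg:
  assumes "p \<in> Delta h a" "goodU u" "h j \<noteq> a"
  shows "0 \<le> muLam lamE p u $ j"
  unfolding muLam_def
proof (simp, rule sum_nonneg)
  fix i
  show "0 \<le> p$i * lamE u i j"
  proof (cases "h i = a")
    case True
    then have "i \<noteq> j" using assms(3) by auto
    then show ?thesis using assms(1,2) Delta_comp(1)[OF assms(1), of i] by (simp add: goodU_def)
  next
    case False then show ?thesis using assms(1) by (simp add: Delta_def)
  qed
qed

lemma muLam1_nonneg:
  assumes "p \<in> Delta h a" "goodU u" "b \<noteq> a"
  shows "0 \<le> muLam1 lamE h p u b"
  unfolding muLam1_eq
proof (rule sum_nonneg)
  fix j assume "j \<in> {j. h j = b}"
  then have "h j \<noteq> a" using assms(3) by simp
  then show "0 \<le> muLam lamE p u $ j" by (rule muLam_nonneg[OF assms(1,2)])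
qed

lemma muLam1_total:
  fixes h :: "'i::finite \<Rightarrow> 'o::finite"
  assumes "goodU u"
  shows "(\<Sum>b\<in>UNIV. muLam1 lamE h p u b) = 0"
proof -
  have "(\<Sum>b\<in>UNIV. muLam1 lamE h p u b) = (\<Sum>b\<in>UNIV. \<Sum>j\<in>{j. j \<in> UNIV \<and> h j = b}. muLam lamE p u $ j)"
  proof -
    have e: "\<And>b. {j. j \<in> UNIV \<and> h j = b} = {j. h j = b}" by simp
    show ?thesis unfolding muLam1_eq e ..
  qed
  also have "\<dots> = (\<Sum>j\<in>UNIV. muLam lamE p u $ j)"
    by (rule sum.group) auto
  also have "\<dots> = (\<Sum>i\<in>UNIV. p$i * (\<Sum>j\<in>UNIV. lamE u i j))"
    unfolding muLam_def by (simp add: sum_distrib_left) (rule sum.swap)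
  also have "\<dots> = 0" using assms by (simp add: goodU_def)
  finally show ?thesis .
qed

lemma LL_Psi:
  fixes h :: "'i::finite \<Rightarrow> 'o::finite"
  assumes pD: "p \<in> Delta h a" and g: "goodU u"
  shows "LL lamE fE h nu0 qd a p c u w = PsiE h nu0 w a (p, (c, u))"
proof -
  let ?m = "\<lambda>b. muLam1 lamE h p u b"
  let ?W = "\<lambda>b. w (Hb h nu0 b (muLam lamE p u))"
  have "rr lamE h a p u * intR lamE h nu0 qd a p u w = (\<Sum>b\<in>UNIV. if b = a then 0 else ?W b * ?m b)"
  proof (cases "- ?m a = 0")
    case False
    have "rr lamE h a p u * intR lamE h nu0 qd a p u w = (\<Sum>b\<in>UNIV. (- ?m a) * (?W b * qq lamE h qd a p u b))"
      unfolding intR_def rr_def by (simp add: sum_distrib_left)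
    also have "\<dots> = (\<Sum>b\<in>UNIV. if b = a then 0 else ?W b * ?m b)"
      by (rule sum.cong) (use False in \<open>auto simp: qq_def\<close>)
    finally show ?thesis .
  next
    case True
    have "(\<Sum>b\<in>UNIV. ?m b) = 0" by (rule muLam1_total[OF g])
    then have "(\<Sum>b\<in>UNIV - {a}. ?m b) = 0"
      using True by (simp add: sum_diff1)
    then have z: "\<forall>b\<in>UNIV - {a}. ?m b = 0"
      by (subst sum_nonneg_eq_0_iff[symmetric]) (auto intro: muLam1_nonneg[OF pD g])
    have "(\<Sum>b\<in>UNIV. if b = a then 0 else ?W b * ?m b) = 0"
      by (rule sum.neutral) (use z in auto)
    moreover have "rr lamE h a p u = 0" using True by (simp add: rr_def)
    ultimately show ?thesis by simp
  qed
  then show ?thesis unfolding LL_def PsiE_def fst_conv snd_conv by simp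
qed

lemma Hb_in:
  assumes y: "\<And>j. h j = b \<Longrightarrow> 0 \<le> y$j" and n: "nu0 b \<in> Delta h b"
  shows "Hb h nu0 b y \<in> Delta h b"
proof (cases "(\<Sum>i\<in>{i. h i = b}. y$i) = 0")
  case True then show ?thesis using n by (simp add: Hb_def)
next
  case False
  define S where "S = (\<Sum>i\<in>{i. h i = b}. y$i)"
  have "0 \<le> S" unfolding S_def by (rule sum_nonneg) (use y in auto)
  then have S0: "0 < S" using False by (simp add: S_def)
  have "(\<Sum>i\<in>UNIV. (if h i = b then y$i / S else 0)) = (\<Sum>i\<in>{i. h i = b}. y$i / S)"
    by (simp add: sum.If_cases Int_def)
  also have "\<dots> = 1" using S0 by (simp add: sum_divide_distrib[symmetric] S_def)
  finally have "(\<Sum>i\<in>UNIV. (if h i = b then y$i / S else 0)) = 1" .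
  then show ?thesis using False S0 y unfolding Hb_def S_def[symmetric]
    by (auto simp: Delta_def)
qed


lemma ev_within_all: "(\<And>x. x \<in> K \<Longrightarrow> P x) \<Longrightarrow> eventually P (at x0 within K)"
  unfolding eventually_at_filter by (rule always_eventually) auto

lemma Delta_in_e: "p \<in> Delta h b \<Longrightarrow> p \<in> Delta_e h"
  unfolding Delta_e_def by auto

lemma cont_wH:
  fixes Y :: "'x::metric_space \<Rightarrow> real^'i::finite" and h :: "'i \<Rightarrow> 'o::finite"
  assumes Yc: "continuous_on K Y" and Yn: "\<And>x j. x \<in> K \<Longrightarrow> h j = b \<Longrightarrow> 0 \<le> Y x $ j"
    and wc: "continuous_on (Delta_e h) w" and n0: "nu0 b \<in> Delta h b"
    and wb: "\<And>p. p \<in> Delta_e h \<Longrightarrow> \<bar>w p\<bar> \<le> Wm"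
  shows "continuous_on K (\<lambda>x. w (Hb h nu0 b (Y x)) * (\<Sum>j\<in>{j. h j = b}. Y x $ j))"
proof -
  define S where "S x = (\<Sum>j\<in>{j. h j = b}. Y x $ j)" for x
  have Scont: "continuous_on K S" unfolding S_def by (intro continuous_intros Yc)
  have S0: "0 \<le> S x" if "x \<in> K" for x unfolding S_def by (rule sum_nonneg) (use Yn that in auto)
  have HD: "Hb h nu0 b (Y x) \<in> Delta_e h" if "x \<in> K" for x
    by (rule Delta_in_e, rule Hb_in) (use Yn that n0 in auto)
  have "continuous_on K (\<lambda>x. w (Hb h nu0 b (Y x)) * S x)"
    unfolding continuous_on_def
  proof (intro ballI)
    fix x0 assume x0: "x0 \<in> K"
    have Sc: "(S \<longlongrightarrow> S x0) (at x0 within K)" using Scont x0 by (simp add: continuous_on_def)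
    show "((\<lambda>x. w (Hb h nu0 b (Y x)) * S x) \<longlongrightarrow> w (Hb h nu0 b (Y x0)) * S x0) (at x0 within K)"
    proof (cases "S x0 = 0")
      case True
      have "((\<lambda>x. w (Hb h nu0 b (Y x)) * S x) \<longlongrightarrow> 0) (at x0 within K)"
      proof (rule Lim_null_comparison)
        show "\<forall>\<^sub>F x in at x0 within K. norm (w (Hb h nu0 b (Y x)) * S x) \<le> Wm * S x"
        proof (rule ev_within_all)
          fix x assume x: "x \<in> K"
          have "\<bar>w (Hb h nu0 b (Y x))\<bar> * \<bar>S x\<bar> \<le> Wm * \<bar>S x\<bar>"
            by (intro mult_right_mono wb HD x) simp
          then show "norm (w (Hb h nu0 b (Y x)) * S x) \<le> Wm * S x"
            using S0[OF x] by (simp add: abs_mult)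
        qed
        show "((\<lambda>x. Wm * S x) \<longlongrightarrow> 0) (at x0 within K)"
          using tendsto_mult_left[OF Sc, of Wm] True by simp
      qed
      then show ?thesis using True by simp
    next
      case False
      then have Sp: "0 < S x0" using S0[OF x0] by simp
      define N where "N y = (\<chi> i. if h i = b then y$i / (\<Sum>k\<in>{k. h k = b}. y$k) else 0)" for y :: "real^'i"
      have evS: "\<forall>\<^sub>F x in at x0 within K. 0 < S x" by (rule order_tendstoD(1)[OF Sc Sp])
      have HN: "Hb h nu0 b (Y x) = N (Y x)" if "0 < S x" for x
        using that unfolding Hb_def N_def S_def by auto
      have NY: "((\<lambda>x. N (Y x)) \<longlongrightarrow> N (Y x0)) (at x0 within K)"
        unfolding N_def
      proof (intro tendsto_vec_lambda)
        fix i
        have Yi: "((\<lambda>x. Y x $ k) \<longlongrightarrow> Y x0 $ k) (at x0 within K)" for k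
          using Yc x0 by (intro tendsto_vec_nth) (simp add: continuous_on_def)
        have Ssum: "((\<lambda>x. \<Sum>k\<in>{k. h k = b}. Y x $ k) \<longlongrightarrow> (\<Sum>k\<in>{k. h k = b}. Y x0 $ k)) (at x0 within K)"
          by (intro tendsto_sum Yi)
        show "((\<lambda>x. if h i = b then Y x $ i / (\<Sum>k\<in>{k. h k = b}. Y x $ k) else 0)
            \<longlongrightarrow> (if h i = b then Y x0 $ i / (\<Sum>k\<in>{k. h k = b}. Y x0 $ k) else 0)) (at x0 within K)"
          using Sp Ssum by (cases "h i = b") (auto intro!: tendsto_divide Yi simp: S_def)
      qed
      have N0: "N (Y x0) \<in> Delta_e h" using HD[OF x0] HN[OF Sp] by simp
      have wcN: "continuous (at (N (Y x0)) within Delta_e h) w"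
        using wc N0 by (simp add: continuous_on_eq_continuous_within)
      have evK: "\<forall>\<^sub>F x in at x0 within K. x \<in> K" by (rule ev_within_all)
      have evN: "\<forall>\<^sub>F x in at x0 within K. N (Y x) \<in> Delta_e h"
        using evS evK by eventually_elim (metis HD HN)
      have "((\<lambda>x. w (N (Y x))) \<longlongrightarrow> w (N (Y x0))) (at x0 within K)"
        by (rule continuous_within_tendsto_compose[OF wcN evN NY])
      then have "((\<lambda>x. w (N (Y x)) * S x) \<longlongrightarrow> w (N (Y x0)) * S x0) (at x0 within K)"
        by (intro tendsto_mult Sc)
      moreover have "\<forall>\<^sub>F x in at x0 within K. w (N (Y x)) * S x = w (Hb h nu0 b (Y x)) * S x"
        using evS by eventually_elim (simp add: HN)
      ultimately show ?thesis using HN[OF Sp] by (auto intro: Lim_transform_eventually)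
    qed
  qed
  then show ?thesis by (simp add: S_def)
qed


locale baseU =
  fixes h :: "'i::finite \<Rightarrow> 'o::finite" and UE :: "((real^'i^'i) \<times> (real^'i)) set"
    and w :: "real^'i \<Rightarrow> real" and nu0 :: "'o \<Rightarrow> real^'i"
  assumes UEc: "compact UE" and UEg: "\<And>u. u \<in> UE \<Longrightarrow> goodU u"
    and wc: "continuous_on (Delta_e h) w" and n0: "\<And>b. nu0 b \<in> Delta h b"
begin

definition "Ka a = Delta h a \<times> ({0..1::real} \<times> UE)"

lemma Ka_compact: "compact (Ka a)"
  unfolding Ka_def by (intro compact_Times compact_Delta compact_Icc UEc)

lemma w_bnd: obtains Wm where "\<And>p. p \<in> Delta_e h \<Longrightarrow> \<bar>w p\<bar> \<le> Wm"
proof -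
  have "bounded (w ` Delta_e h)"
    by (intro compact_imp_bounded compact_continuous_image wc compact_Delta_e)
  then obtain Wm where "\<forall>x\<in>w ` Delta_e h. norm x \<le> Wm" unfolding bounded_iff by blast
  then show ?thesis by (intro that) auto
qed

lemma Psi_cont: "continuous_on (Ka a) (PsiE h nu0 w a)"
proof -
  obtain Wm where Wm: "\<And>p. p \<in> Delta_e h \<Longrightarrow> \<bar>w p\<bar> \<le> Wm" using w_bnd by blast
  have Yc: "continuous_on (Ka a) (\<lambda>x. muLam lamE (fst x) (snd (snd x)))"
    unfolding muLam_def lamE_def by (intro continuous_on_vec_lambda continuous_intros)
  have cb: "continuous_on (Ka a) (\<lambda>x. if b = a then 0 else w (Hb h nu0 b (muLam lamE (fst x) (snd (snd x)))) * muLam1 lamE h (fst x) (snd (snd x)) b)" for b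
  proof (cases "b = a")
    case True then show ?thesis by simp
  next
    case False
    have "continuous_on (Ka a) (\<lambda>x. w (Hb h nu0 b (muLam lamE (fst x) (snd (snd x)))) * (\<Sum>j\<in>{j. h j = b}. muLam lamE (fst x) (snd (snd x)) $ j))"
    proof (rule cont_wH[OF Yc _ wc n0 Wm])
      fix x j assume x: "x \<in> Ka a" and hj: "h j = b"
      show "0 \<le> muLam lamE (fst x) (snd (snd x)) $ j"
        by (rule muLam_nonneg[where h=h and a=a]) (use x hj False UEg in \<open>auto simp: Ka_def\<close>)
    qed
    then show ?thesis using False by (simp add: muLam1_eq)
  qed
  show ?thesis unfolding PsiE_def fE_def
    by (intro continuous_intros cb)
qed

lemma Psi_bnd: obtains M where "\<And>a x. x \<in> Ka a \<Longrightarrow> \<bar>PsiE h nu0 w a x\<bar> \<le> M"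
proof -
  have "\<forall>a. \<exists>M. \<forall>x\<in>Ka a. \<bar>PsiE h nu0 w a x\<bar> \<le> M"
  proof
    fix a
    have "bounded (PsiE h nu0 w a ` Ka a)"
      by (intro compact_imp_bounded compact_continuous_image Psi_cont Ka_compact)
    then show "\<exists>M. \<forall>x\<in>Ka a. \<bar>PsiE h nu0 w a x\<bar> \<le> M" unfolding bounded_iff by auto
  qed
  then obtain Mf where Mf: "\<And>a x. x \<in> Ka a \<Longrightarrow> \<bar>PsiE h nu0 w a x\<bar> \<le> Mf a" by metis
  have "Mf a \<le> Max (range Mf)" for a by (rule Max_ge) auto
  then show ?thesis using that Mf by (meson order_trans)
qed

lemma Psi_uc:
  assumes "0 < e"
  obtains d where "0 < d" "\<And>a x y. x \<in> Ka a \<Longrightarrow> y \<in> Ka a \<Longrightarrow> dist x y < d \<Longrightarrow> \<bar>PsiE h nu0 w a x - PsiE h nu0 w a y\<bar> < e"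
proof -
  have "\<forall>a. \<exists>d>0. \<forall>x\<in>Ka a. \<forall>y\<in>Ka a. dist x y < d \<longrightarrow> \<bar>PsiE h nu0 w a x - PsiE h nu0 w a y\<bar> < e"
  proof
    fix a
    have "uniformly_continuous_on (Ka a) (PsiE h nu0 w a)"
      by (intro compact_uniformly_continuous Psi_cont Ka_compact)
    then show "\<exists>d>0. \<forall>x\<in>Ka a. \<forall>y\<in>Ka a. dist x y < d \<longrightarrow> \<bar>PsiE h nu0 w a x - PsiE h nu0 w a y\<bar> < e"
      unfolding uniformly_continuous_on_def using assms by (metis dist_commute dist_real_def)
  qed
  then obtain df where df: "\<And>a. 0 < df a" "\<And>a x y. x \<in> Ka a \<Longrightarrow> y \<in> Ka a \<Longrightarrow> dist x y < df a \<Longrightarrow> \<bar>PsiE h nu0 w a x - PsiE h nu0 w a y\<bar> < e"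
    by metis
  define d where "d = Min (range df)"
  have d0: "0 < d" unfolding d_def using df(1) by (subst Min_gr_iff) auto
  have "d \<le> df a" for a unfolding d_def by (rule Min_le) auto
  then show ?thesis using that[OF d0] df(2) by (meson less_le_trans)
qed

end

locale odeBf = odeB h a B Lm for h :: "'i::finite \<Rightarrow> 'o::finite" and a B Lm

context odeBf begin

definition "Phi w nu0 \<beta> \<nu> t = exp (- \<beta> * t) * PsiE h nu0 w a (solG \<nu> t, (chi lamE h a B \<nu> t, B t))"

lemma chi_range_all: "\<nu> \<in> Delta h a \<Longrightarrow> chi lamE h a B \<nu> t \<in> {0..1}"
  using chi_range by simp

lemma JJ_eq:
  assumes "baseU h UE w nu0" "\<And>s. B s \<in> UE" "\<nu> \<in> Delta h a"
  shows "JJ lamE fE h nu0 qd \<beta> T w a \<nu> B = integral {0..T} (Phi w nu0 \<beta> \<nu>)"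
proof -
  interpret baseU h UE w nu0 by (rule assms(1))
  show ?thesis unfolding JJ_def Phi_def
  proof (rule integral_cong)
    fix t
    show "exp (- \<beta> * t) * LL lamE fE h nu0 qd a (phi lamE h a B \<nu> t) (chi lamE h a B \<nu> t) (B t) w =
        exp (- \<beta> * t) * PsiE h nu0 w a (solG \<nu> t, chi lamE h a B \<nu> t, B t)"
      unfolding phi_eq[OF assms(3)]
      by (simp add: LL_Psi[OF solG_in[OF assms(3)] UEg[OF assms(2)]])
  qed
qed

lemma Phi_meas:
  assumes "baseU h UE w nu0" "\<And>s. B s \<in> UE" "\<nu> \<in> Delta h a"
  shows "Phi w nu0 \<beta> \<nu> \<in> borel_measurable lebesgue"
proof -
  interpret baseU h UE w nu0 by (rule assms(1))
  have m: "(\<lambda>t. (solG \<nu> t, (chi lamE h a B \<nu> t, B t))) \<in> borel_measurable lebesgue"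
    by (intro borel_measurable_Pair solG_meas Bmeas cont_meas_leb chi_cont assms(3))
  have "(\<lambda>t. PsiE h nu0 w a (solG \<nu> t, (chi lamE h a B \<nu> t, B t))) \<in> borel_measurable lebesgue"
    by (rule meas_cont_comp_on[OF Psi_cont _ m])
      (simp add: Ka_def solG_in[OF assms(3)] chi_range[OF assms(3)] assms(2))
  moreover have "(\<lambda>t. exp (- \<beta> * t)) \<in> borel_measurable lebesgue"
    by (intro cont_meas_leb continuous_intros)
  ultimately show ?thesis unfolding Phi_def[abs_def] by (intro borel_measurable_times)
qed

lemma Phi_bnd:
  assumes "baseU h UE w nu0" "\<And>s. B s \<in> UE" "\<nu> \<in> Delta h a" "0 \<le> \<beta>" "0 \<le> t"
    and M: "\<And>a x. x \<in> baseU.Ka h UE a \<Longrightarrow> \<bar>PsiE h nu0 w a x\<bar> \<le> M"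
  shows "\<bar>Phi w nu0 \<beta> \<nu> t\<bar> \<le> M"
proof -
  interpret baseU h UE w nu0 by (rule assms(1))
  have P: "\<bar>PsiE h nu0 w a (solG \<nu> t, (chi lamE h a B \<nu> t, B t))\<bar> \<le> M"
    by (rule M) (simp add: Ka_def solG_in[OF assms(3)] chi_range[OF assms(3)] assms(2))
  have e: "exp (- \<beta> * t) \<le> 1" using assms(4,5) by simp
  have "\<bar>Phi w nu0 \<beta> \<nu> t\<bar> = exp (- \<beta> * t) * \<bar>PsiE h nu0 w a (solG \<nu> t, (chi lamE h a B \<nu> t, B t))\<bar>"
    by (simp add: Phi_def abs_mult)
  also have "\<dots> \<le> 1 * M"
    using P e by (intro mult_mono) auto
  finally show ?thesis by simp
qed

lemma JJ_bound:
  assumes bu: "baseU h UE w nu0" and BU: "\<And>s. B s \<in> UE" and nD: "\<nu> \<in> Delta h a" and b: "0 \<le> \<beta>" and T: "0 \<le> T"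
    and M: "\<And>a x. x \<in> baseU.Ka h UE a \<Longrightarrow> \<bar>PsiE h nu0 w a x\<bar> \<le> M"
  shows "\<bar>JJ lamE fE h nu0 qd \<beta> T w a \<nu> B\<bar> \<le> T * M"
proof -
  have "norm (integral {0..T} (Phi w nu0 \<beta> \<nu>)) \<le> integral {0..T} (\<lambda>_. M)"
  proof (rule integral_norm_bound_integral)
    show "Phi w nu0 \<beta> \<nu> integrable_on {0..T}"
      by (rule integrable_bounded_meas[OF Phi_meas[OF bu BU nD]]) (use Phi_bnd[OF bu BU nD b _ M] in auto)
  qed (use Phi_bnd[OF bu BU nD b _ M] in auto)
  then show ?thesis using T by (simp add: JJ_eq[OF bu BU nD])
qed

lemma JJ_close:
  assumes bu: "baseU h UE w nu0" and BU: "\<And>s. B s \<in> UE" and nD: "\<nu> \<in> Delta h a" and rD: "\<rho> \<in> Delta h a"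
    and b: "0 \<le> \<beta>" and T: "0 \<le> T"
    and M: "\<And>a x. x \<in> baseU.Ka h UE a \<Longrightarrow> \<bar>PsiE h nu0 w a x\<bar> \<le> M"
    and d: "\<And>a x y. x \<in> baseU.Ka h UE a \<Longrightarrow> y \<in> baseU.Ka h UE a \<Longrightarrow> dist x y < d \<Longrightarrow> \<bar>PsiE h nu0 w a x - PsiE h nu0 w a y\<bar> < e"
    and c1: "exp (2 * cF * T) * norm (\<nu> - \<rho>) < d / 2"
    and c2: "cR * T * exp (2 * cF * T) * norm (\<nu> - \<rho>) < d / 2"
  shows "\<bar>JJ lamE fE h nu0 qd \<beta> T w a \<nu> B - JJ lamE fE h nu0 qd \<beta> T w a \<rho> B\<bar> \<le> T * e"
proof -
  interpret baseU h UE w nu0 by (rule bu)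
  have iN: "Phi w nu0 \<beta> \<nu> integrable_on {0..T}"
    by (rule integrable_bounded_meas[OF Phi_meas[OF bu BU nD]]) (use Phi_bnd[OF bu BU nD b _ M] in auto)
  have iR: "Phi w nu0 \<beta> \<rho> integrable_on {0..T}"
    by (rule integrable_bounded_meas[OF Phi_meas[OF bu BU rD]]) (use Phi_bnd[OF bu BU rD b _ M] in auto)
  have "norm (integral {0..T} (\<lambda>t. Phi w nu0 \<beta> \<nu> t - Phi w nu0 \<beta> \<rho> t)) \<le> integral {0..T} (\<lambda>_. e)"
  proof (rule integral_norm_bound_integral)
    show "(\<lambda>t. Phi w nu0 \<beta> \<nu> t - Phi w nu0 \<beta> \<rho> t) integrable_on {0..T}" by (intro integrable_diff iN iR)
    fix t assume t: "t \<in> {0..T}"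
    let ?x = "(solG \<nu> t, (chi lamE h a B \<nu> t, B t))" and ?y = "(solG \<rho> t, (chi lamE h a B \<rho> t, B t))"
    have xK: "?x \<in> Ka a" by (simp add: Ka_def solG_in[OF nD] chi_range[OF nD] BU)
    have yK: "?y \<in> Ka a" by (simp add: Ka_def solG_in[OF rD] chi_range[OF rD] BU)
    have "dist ?x ?y = norm (solG \<nu> t - solG \<rho> t, (chi lamE h a B \<nu> t - chi lamE h a B \<rho> t, 0::(real^'i^'i) \<times> (real^'i)))"
      by (simp add: dist_norm)
    also have "\<dots> \<le> norm (solG \<nu> t - solG \<rho> t) + norm (chi lamE h a B \<nu> t - chi lamE h a B \<rho> t, 0::(real^'i^'i) \<times> (real^'i))"
      by (rule norm_Pair_le)
    also have "norm (chi lamE h a B \<nu> t - chi lamE h a B \<rho> t, 0::(real^'i^'i) \<times> (real^'i)) \<le> \<bar>chi lamE h a B \<nu> t - chi lamE h a B \<rho> t\<bar>"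
      using norm_Pair_le[of "chi lamE h a B \<nu> t - chi lamE h a B \<rho> t" "0::(real^'i^'i) \<times> (real^'i)"] by simp
    finally have "dist ?x ?y \<le> norm (solG \<nu> t - solG \<rho> t) + \<bar>chi lamE h a B \<nu> t - chi lamE h a B \<rho> t\<bar>" by simp
    also have "\<dots> < d / 2 + d / 2"
      using sol_lipT[OF nD rD t] chi_lip[OF nD rD t] c1 c2 by linarith
    finally have "dist ?x ?y < d" by simp
    then have P: "\<bar>PsiE h nu0 w a ?x - PsiE h nu0 w a ?y\<bar> < e" by (rule d[OF xK yK])
    have ex: "exp (- \<beta> * t) \<le> 1" using b t by simp
    have "norm (Phi w nu0 \<beta> \<nu> t - Phi w nu0 \<beta> \<rho> t) = exp (- \<beta> * t) * \<bar>PsiE h nu0 w a ?x - PsiE h nu0 w a ?y\<bar>"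
      by (simp add: Phi_def abs_mult right_diff_distrib[symmetric])
    also have "\<dots> \<le> 1 * e" using P ex by (intro mult_mono) auto
    finally show "norm (Phi w nu0 \<beta> \<nu> t - Phi w nu0 \<beta> \<rho> t) \<le> e" by simp
  qed (rule integrable_const_ivl)
  then show ?thesis using T
    by (simp add: JJ_eq[OF bu BU nD] JJ_eq[OF bu BU rD] integral_diff[OF iN iR])
qed

end

lemma modulus_family:
  fixes a b :: "nat \<Rightarrow> real"
  assumes a0: "\<And>k. 0 \<le> a k" and b0: "\<And>k. 0 \<le> b k" and alim: "a \<longlonglongrightarrow> 0"
  defines "\<eta> \<equiv> \<lambda>t. (INF k. a k + b k * t)"
  shows "modulus_of_continuity \<eta>" and "\<And>k t. 0 \<le> t \<Longrightarrow> \<eta> t \<le> a k + b k * t"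
proof -
  have bdd: "bdd_below (range (\<lambda>k. a k + b k * t))" if "0 \<le> t" for t
    by (rule bdd_belowI[of _ 0]) (use a0 b0 that in auto)
  show up: "\<eta> t \<le> a k + b k * t" if "0 \<le> t" for k t
    unfolding \<eta>_def by (rule cINF_lower[OF bdd[OF that]]) simp
  have nn: "0 \<le> \<eta> t" if "0 \<le> t" for t
    unfolding \<eta>_def by (rule cINF_greatest) (use a0 b0 that in auto)
  have mono: "\<eta> s \<le> \<eta> t" if "0 \<le> s" "s \<le> t" for s t
    unfolding \<eta>_def
  proof (rule cINF_greatest)
    fix x assume "x \<in> (UNIV :: nat set)"
    have "(INF k. a k + b k * s) \<le> a x + b x * s" by (rule cINF_lower[OF bdd[OF that(1)]]) simp
    also have "\<dots> \<le> a x + b x * t" using b0[of x] that by (simp add: mult_left_mono)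
    finally show "(INF k. a k + b k * s) \<le> a x + b x * t" .
  qed simp
  have sub: "\<eta> (s + t) \<le> \<eta> s + \<eta> t" if "0 \<le> s" "0 \<le> t" for s t
  proof -
    have key: "\<eta> (s + t) \<le> (a j + b j * s) + (a k + b k * t)" for j k
    proof (cases "b j \<le> b k")
      case True
      have "\<eta> (s + t) \<le> a j + b j * (s + t)" by (rule up) (use that in auto)
      also have "\<dots> \<le> (a j + b j * s) + (a k + b k * t)"
        using True a0[of k] that mult_left_mono[OF True, of t] by (simp add: algebra_simps)
      finally show ?thesis .
    next
      case False
      have "\<eta> (s + t) \<le> a k + b k * (s + t)" by (rule up) (use that in auto)
      also have "\<dots> \<le> (a j + b j * s) + (a k + b k * t)"
        using False a0[of j] that mult_left_mono[of "b k" "b j" s] by (simp add: algebra_simps)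
      finally show ?thesis .
    qed
    have "\<eta> (s + t) - (a k + b k * t) \<le> (INF j. a j + b j * s)" for k
      by (rule cINF_greatest) (use key[of _ k] in \<open>auto simp: algebra_simps\<close>)
    then have A: "\<eta> (s + t) - (a k + b k * t) \<le> \<eta> s" for k by (simp add: \<eta>_def)
    have "\<eta> (s + t) - \<eta> s \<le> (INF k. a k + b k * t)"
      by (rule cINF_greatest) (use A in \<open>auto simp: algebra_simps\<close>)
    then have "\<eta> (s + t) - \<eta> s \<le> \<eta> t" by (simp add: \<eta>_def)
    then show ?thesis by simp
  qed
  have eta0: "\<eta> 0 = 0"
  proof -
    have "\<eta> 0 \<le> a k" for k using up[of 0 k] by simp
    then have "\<eta> 0 \<le> 0" using alim by (intro LIMSEQ_le_const) auto
    then show ?thesis using nn[of 0] by simp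
  qed
  have small: "\<exists>d>0. \<forall>t. 0 \<le> t \<longrightarrow> t < d \<longrightarrow> \<eta> t < e" if e: "0 < e" for e
  proof -
    obtain k where k: "a k < e / 2"
      using order_tendstoD(2)[OF alim, of "e/2"] e by (auto dest: eventually_happens)
    define d where "d = e / (2 * (b k + 1))"
    have d0: "0 < d" unfolding d_def using e b0[of k] by (simp add: add_nonneg_pos)
    have "\<eta> t < e" if "0 \<le> t" "t < d" for t
    proof -
      have "\<eta> t \<le> a k + b k * t" by (rule up[OF that(1)])
      also have "b k * t \<le> b k * d" using that b0[of k] by (simp add: mult_left_mono)
      also have "b k * d \<le> e / 2"
      proof -
        have "b k * d = e / 2 * (b k / (b k + 1))" unfolding d_def by (simp add: field_simps)
        also have "\<dots> \<le> e / 2 * 1" using e b0[of k] by (intro mult_left_mono) auto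
        finally show ?thesis by simp
      qed
      finally show ?thesis using k by simp
    qed
    then show ?thesis using d0 by blast
  qed
  have lip: "\<bar>\<eta> t - \<eta> s\<bar> \<le> \<eta> \<bar>t - s\<bar>" if "0 \<le> s" "0 \<le> t" for s t
  proof (cases "s \<le> t")
    case True
    have "\<eta> t = \<eta> (s + (t - s))" by simp
    also have "\<dots> \<le> \<eta> s + \<eta> (t - s)" using that True by (intro sub) auto
    finally show ?thesis using mono[OF that(1) True] True by simp
  next
    case False
    have "\<eta> s = \<eta> (t + (s - t))" by simp
    also have "\<dots> \<le> \<eta> t + \<eta> (s - t)" using that False by (intro sub) auto
    finally show ?thesis using mono[OF that(2)] False by simp
  qed
  have cont: "continuous_on {0..} \<eta>"
    unfolding continuous_on_iff
  proof (intro ballI allI impI)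
    fix x e :: real assume x: "x \<in> {0..}" and e: "0 < e"
    obtain d where d: "0 < d" "\<And>t. 0 \<le> t \<Longrightarrow> t < d \<Longrightarrow> \<eta> t < e" using small[OF e] by blast
    show "\<exists>d>0. \<forall>x'\<in>{0..}. dist x' x < d \<longrightarrow> dist (\<eta> x') (\<eta> x) < e"
    proof (intro exI[of _ d] conjI ballI impI)
      fix y assume y: "y \<in> {0..}" "dist y x < d"
      have "\<bar>\<eta> y - \<eta> x\<bar> \<le> \<eta> \<bar>y - x\<bar>" using x y by (intro lip) auto
      also have "\<dots> < e" using y(2) by (intro d(2)) (auto simp: dist_real_def)
      finally show "dist (\<eta> y) (\<eta> x) < e" by (simp add: dist_real_def)
    qed (rule d(1))
  qed
  have lim: "(\<eta> \<longlongrightarrow> 0) (at_right 0)"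
  proof (rule tendstoI)
    fix e :: real assume e: "0 < e"
    obtain d where d: "0 < d" "\<And>t. 0 \<le> t \<Longrightarrow> t < d \<Longrightarrow> \<eta> t < e" using small[OF e] by blast
    show "\<forall>\<^sub>F t in at_right 0. dist (\<eta> t) 0 < e"
    proof (rule eventually_at_rightI[OF _ d(1)])
      fix t assume "t \<in> {0<..<d}"
      then show "dist (\<eta> t) 0 < e" using d(2)[of t] nn[of t] by (simp add: dist_real_def)
    qed
  qed
  show "modulus_of_continuity \<eta>"
    unfolding modulus_of_continuity_def
    using cont lim nn sub by (auto intro!: mono_onI mono)
qed


lemma muLam_cong: "(\<And>i j. lam u i j = lam' u' i j) \<Longrightarrow> muLam lam p u = muLam lam' p u'"
  by (simp add: muLam_def)
lemma muLam1_cong: "(\<And>i j. lam u i j = lam' u' i j) \<Longrightarrow> muLam1 lam h p u b = muLam1 lam' h p u' b"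
  by (simp add: muLam1_def)
lemma Fvf_cong: assumes "\<And>i j. lam u i j = lam' u' i j" shows "Fvf lam h a p u = Fvf lam' h a p u'"
  unfolding Fvf_def muLam_def muLam1_def by (simp only: assms)
lemma rr_cong: assumes "\<And>i j. lam u i j = lam' u' i j" shows "rr lam h a p u = rr lam' h a p u'"
  unfolding rr_def muLam1_def by (simp only: assms)
lemma LL_cong: assumes "\<And>i j. lam u i j = lam' u' i j" "\<And>i. f i u = f' i u'"
  shows "LL lam f h nu0 qd a p c u w = LL lam' f' h nu0 qd a p c u' w"
  unfolding LL_def rr_def intR_def qq_def muLam_def muLam1_def by (simp only: assms)

lemma phi_cong:
  assumes "\<And>s i j. 0 \<le> s \<Longrightarrow> lam (\<alpha> s) i j = lam' (\<alpha>' s) i j"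
  shows "phi lam h a \<alpha> \<rho> = phi lam' h a \<alpha>' \<rho>"
proof -
  have "(\<forall>t\<ge>0. ((\<lambda>s. Fvf lam h a (z s) (\<alpha> s)) has_integral (z t - \<rho>)) {0..t}) \<longleftrightarrow>
        (\<forall>t\<ge>0. ((\<lambda>s. Fvf lam' h a (z s) (\<alpha>' s)) has_integral (z t - \<rho>)) {0..t})" for z
  proof -
    have "((\<lambda>s. Fvf lam h a (z s) (\<alpha> s)) has_integral (z t - \<rho>)) {0..t} \<longleftrightarrow>
          ((\<lambda>s. Fvf lam' h a (z s) (\<alpha>' s)) has_integral (z t - \<rho>)) {0..t}" for t
      by (rule has_integral_cong) (rule Fvf_cong, rule assms, simp)
    then show ?thesis by simp
  qed
  then show ?thesis unfolding phi_def by simp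
qed

lemma chi_cong:
  assumes "\<And>s i j. 0 \<le> s \<Longrightarrow> lam (\<alpha> s) i j = lam' (\<alpha>' s) i j"
  shows "chi lam h a \<alpha> \<rho> t = chi lam' h a \<alpha>' \<rho> t"
proof -
  have p: "phi lam h a \<alpha> \<rho> = phi lam' h a \<alpha>' \<rho>" using assms by (rule phi_cong)
  have "integral {0..t} (\<lambda>s. rr lam h a (phi lam h a \<alpha> \<rho> s) (\<alpha> s)) = integral {0..t} (\<lambda>s. rr lam' h a (phi lam' h a \<alpha>' \<rho> s) (\<alpha>' s))"
    unfolding p
  proof (rule integral_cong)
    fix s assume "s \<in> {0..t}"
    then have "0 \<le> s" by simp
    then show "rr lam h a (phi lam' h a \<alpha>' \<rho> s) (\<alpha> s) = rr lam' h a (phi lam' h a \<alpha>' \<rho> s) (\<alpha>' s)"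
      by (intro rr_cong assms)
  qed
  then show ?thesis by (simp add: chi_def)
qed

lemma JJ_cong:
  assumes "\<And>s i j. 0 \<le> s \<Longrightarrow> lam (\<alpha> s) i j = lam' (\<alpha>' s) i j"
    and "\<And>s i. 0 \<le> s \<Longrightarrow> f i (\<alpha> s) = f' i (\<alpha>' s)"
  shows "JJ lam f h nu0 qd \<beta> T w a \<nu> \<alpha> = JJ lam' f' h nu0 qd \<beta> T w a \<nu> \<alpha>'"
proof -
  have p: "phi lam h a \<alpha> \<nu> = phi lam' h a \<alpha>' \<nu>" using assms(1) by (rule phi_cong)
  have c: "chi lam h a \<alpha> \<nu> t = chi lam' h a \<alpha>' \<nu> t" for t using assms(1) by (rule chi_cong)
  show ?thesis unfolding JJ_def p c
  proof (rule integral_cong)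
    fix t assume "t \<in> {0..T}"
    then have t: "0 \<le> t" by simp
    show "exp (- \<beta> * t) * LL lam f h nu0 qd a (phi lam' h a \<alpha>' \<nu> t) (chi lam' h a \<alpha>' \<nu> t) (\<alpha> t) w =
          exp (- \<beta> * t) * LL lam' f' h nu0 qd a (phi lam' h a \<alpha>' \<nu> t) (chi lam' h a \<alpha>' \<nu> t) (\<alpha>' t) w"
      using LL_cong[where lam=lam and u="\<alpha> t" and lam'=lam' and u'="\<alpha>' t" and f=f and f'=f', OF assms(1)[OF t] assms(2)[OF t]]
      by simp
  qed
qed


theorem mainTheorem10:
  fixes lam :: "'u::metric_space \<Rightarrow> 'i::finite \<Rightarrow> 'i \<Rightarrow> real"
    and f :: "'i \<Rightarrow> 'u \<Rightarrow> real"
    and h :: "'i \<Rightarrow> 'o::finite"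
    and U :: "'u set"
    and nu0 :: "'o \<Rightarrow> real^'i"
    and qd :: "'o \<Rightarrow> 'o \<Rightarrow> real"
    and \<beta> T :: real
    and w :: "real^'i \<Rightarrow> real"
  assumes h_surj: "surj h"
    and h_nonconst: "\<exists>i j. h i \<noteq> h j"
    and U_compact: "compact U"
    and lam_nonneg: "\<And>u i j. u \<in> U \<Longrightarrow> i \<noteq> j \<Longrightarrow> 0 \<le> lam u i j"
    and lam_rows: "\<And>u i. u \<in> U \<Longrightarrow> (\<Sum>j\<in>UNIV. lam u i j) = 0"
    and nu0_in: "\<And>b. nu0 b \<in> Delta h b"
    and qd_nonneg: "\<And>a b. 0 \<le> qd a b"
    and qd_diag: "\<And>a. qd a a = 0"
    and qd_sum: "\<And>a. (\<Sum>b\<in>UNIV. qd a b) = 1"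
    and beta_pos: "\<beta> > 0"
    and lam_cont: "\<And>i j. continuous_on U (\<lambda>u. lam u i j)"
    and f_cont: "\<And>i. continuous_on U (f i)"
    and T_pos: "T > 0"
    and w_cont: "continuous_on (Delta_e h) w"
  shows "\<exists>C K1 K2 \<eta>. C > 0 \<and> K1 > 0 \<and> K2 > 0 \<and> modulus_of_continuity \<eta> \<and>
    (\<forall>\<alpha>\<in>Adm U. \<forall>a b \<nu> \<rho>. \<nu> \<in> Delta h a \<longrightarrow> \<rho> \<in> Delta h b \<longrightarrow>
       \<bar>JJ lam f h nu0 qd \<beta> T w a \<nu> \<alpha> - JJ lam f h nu0 qd \<beta> T w b \<rho> \<alpha>\<bar>
         \<le> K1 * norm (\<nu> - \<rho>) + K2 * \<eta> (C * norm (\<nu> - \<rho>)))"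
proof -
  define E where "E u = ((\<chi> i j. lam u i j) :: real^'i^'i, (\<chi> i. f i u) :: real^'i)" for u
  define UE where "UE = E ` U"
  have Ec: "continuous_on U E"
    unfolding E_def by (intro continuous_on_Pair continuous_on_vec_lambda lam_cont f_cont)
  have UEc: "compact UE" unfolding UE_def by (rule compact_continuous_image[OF Ec U_compact])
  have lamE_E: "lamE (E u) i j = lam u i j" for u i j by (simp add: E_def lamE_def)
  have fE_E: "fE i (E u) = f i u" for u i by (simp add: E_def fE_def)
  have UEg: "goodU x" if "x \<in> UE" for x
    using that lam_nonneg lam_rows unfolding UE_def goodU_def by (auto simp: lamE_E)
  obtain L where L: "\<forall>x\<in>UE. norm x \<le> L" using compact_imp_bounded[OF UEc] unfolding bounded_iff by blast
  define Lm where "Lm = max L 0"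
  have UEb: "\<bar>lamE x i j\<bar> \<le> Lm" if "x \<in> UE" for x i j
  proof -
    have "\<bar>lamE x i j\<bar> \<le> norm (fst x $ i)" unfolding lamE_def by (rule component_le_norm_cart)
    also have "\<dots> \<le> norm (fst x)" by (rule Finite_Cartesian_Product.norm_nth_le)
    also have "\<dots> \<le> norm (fst x, snd x)" by (rule norm_fst_le)
    also have "\<dots> \<le> L" using L that by simp
    also have "L \<le> Lm" by (simp add: Lm_def)
    finally show ?thesis .
  qed
  have bu: "baseU h UE w nu0" by unfold_locales (use UEc UEg w_cont nu0_in in auto)
  interpret baseU h UE w nu0 by (rule bu)
  obtain M where M: "\<And>a x. x \<in> Ka a \<Longrightarrow> \<bar>PsiE h nu0 w a x\<bar> \<le> M" using Psi_bnd by blast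
  define Bo where "Bo \<alpha> s = E (\<alpha> (max s 0))" for \<alpha> :: "real \<Rightarrow> 'u" and s
  have BoU: "\<alpha> \<in> Adm U \<Longrightarrow> Bo \<alpha> s \<in> UE" for \<alpha> s
    unfolding Bo_def UE_def Adm_def by auto
  have Bmeas: "Bo \<alpha> \<in> borel_measurable lebesgue" if \<alpha>: "\<alpha> \<in> Adm U" for \<alpha>
  proof -
    have a1: "\<alpha> \<in> restrict_space borel {0..} \<rightarrow>\<^sub>M borel"
      using \<alpha> unfolding Adm_def
      using measurable_cong_sets[OF sets_restrict_space_cong[OF sets_lborel, of "{0::real..}"] refl, of borel]
      by blast
    have mx: "(\<lambda>s::real. max s 0) \<in> borel \<rightarrow>\<^sub>M restrict_space borel {0..}"
      by (rule measurable_restrict_space2) (auto intro: borel_measurable_continuous_onI continuous_intros)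
    have "(\<lambda>s. \<alpha> (max s 0)) \<in> borel_measurable borel"
      using measurable_comp[OF mx a1] by (simp add: o_def)
    then have g: "(\<lambda>s. \<alpha> (max s 0)) \<in> borel_measurable lebesgue" by (rule borel_leb)
    show ?thesis unfolding Bo_def[abs_def]
      by (rule meas_cont_comp_on[OF Ec _ g]) (use \<alpha> in \<open>auto simp: Adm_def\<close>)
  qed
  have inst: "odeBf h a (Bo \<alpha>) Lm" if \<alpha>: "\<alpha> \<in> Adm U" for \<alpha> a
  proof unfold_locales
    show "Bo \<alpha> \<in> borel_measurable lebesgue" by (rule Bmeas[OF \<alpha>])
    show "0 \<le> lamE (Bo \<alpha> s) i j" if "i \<noteq> j" for s i j
      using UEg[OF BoU[OF \<alpha>, of s]] that by (simp add: goodU_def)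
    show "(\<Sum>j\<in>UNIV. lamE (Bo \<alpha> s) i j) = 0" for s i
      using UEg[OF BoU[OF \<alpha>, of s]] by (simp add: goodU_def)
    show "\<bar>lamE (Bo \<alpha> s) i j\<bar> \<le> Lm" for s i j by (rule UEb[OF BoU[OF \<alpha>]])
    show "Delta h a \<noteq> {}" using nu0_in[of a] by auto
  qed
  have JJtr: "JJ lam f h nu0 qd \<beta> T w a \<nu> \<alpha> = JJ lamE fE h nu0 qd \<beta> T w a \<nu> (Bo \<alpha>)" for \<alpha> a \<nu>
    by (rule JJ_cong) (simp_all add: Bo_def lamE_E fE_E)
  define n where "n = real CARD('i)"
  have n1: "1 \<le> n" unfolding n_def by simp
  define cF0 where "cF0 = 3 * real CARD('i)^3 * Lm + 1"
  define cR0 where "cR0 = real CARD('i) * real CARD('i) * Lm"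
  define E0 where "E0 = exp (2 * cF0 * T)"
  have cR00: "0 \<le> cR0" unfolding cR0_def Lm_def by simp
  have E00: "0 < E0" unfolding E0_def by simp
  define M' where "M' = max M 0"
  have Bd: "\<bar>JJ lam f h nu0 qd \<beta> T w a \<nu> \<alpha>\<bar> \<le> T * M'" if \<alpha>: "\<alpha> \<in> Adm U" and nD: "\<nu> \<in> Delta h a" for \<alpha> a \<nu>
  proof -
    interpret odeBf h a "Bo \<alpha>" Lm by (rule inst[OF \<alpha>])
    have "\<bar>JJ lamE fE h nu0 qd \<beta> T w a \<nu> (Bo \<alpha>)\<bar> \<le> T * M"
      by (rule JJ_bound[OF bu BoU[OF \<alpha>] nD _ _ M]) (use beta_pos T_pos in auto)
    also have "\<dots> \<le> T * M'" using T_pos by (intro mult_left_mono) (auto simp: M'_def)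
    finally show ?thesis by (simp add: JJtr)
  qed
  have Cl: "\<exists>\<delta>>0. \<forall>\<alpha>\<in>Adm U. \<forall>a b \<nu> \<rho>. \<nu> \<in> Delta h a \<longrightarrow> \<rho> \<in> Delta h b \<longrightarrow> norm (\<nu> - \<rho>) < \<delta> \<longrightarrow>
      \<bar>JJ lam f h nu0 qd \<beta> T w a \<nu> \<alpha> - JJ lam f h nu0 qd \<beta> T w b \<rho> \<alpha>\<bar> \<le> e" if e: "0 < e" for e
  proof -
    have e': "0 < e / (T + 1)" using e T_pos by simp
    obtain d where d0: "0 < d" and d: "\<And>a x y. x \<in> Ka a \<Longrightarrow> y \<in> Ka a \<Longrightarrow> dist x y < d \<Longrightarrow> \<bar>PsiE h nu0 w a x - PsiE h nu0 w a y\<bar> < e / (T + 1)"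
      using Psi_uc[OF e'] by blast
    define K where "K = E0 + cR0 * T * E0 + 1"
    have K1: "1 \<le> K" unfolding K_def using E00 cR00 T_pos by simp
    define \<delta> where "\<delta> = min (1 / n) (d / (2 * K))"
    have \<delta>0: "0 < \<delta>" unfolding \<delta>_def using n1 d0 K1 by simp
    have "\<bar>JJ lam f h nu0 qd \<beta> T w a \<nu> \<alpha> - JJ lam f h nu0 qd \<beta> T w b \<rho> \<alpha>\<bar> \<le> e"
      if \<alpha>: "\<alpha> \<in> Adm U" and nD: "\<nu> \<in> Delta h a" and rD: "\<rho> \<in> Delta h b" and nr: "norm (\<nu> - \<rho>) < \<delta>" for \<alpha> a b \<nu> \<rho>
    proof -
      have ab: "a = b"
      proof (rule ccontr)
        assume "a \<noteq> b"
        then have "1 \<le> n * norm (\<nu> - \<rho>)" unfolding n_def by (rule Delta_cross[OF nD rD])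
        moreover have "n * norm (\<nu> - \<rho>) < n * (1 / n)"
          using nr n1 by (intro mult_strict_left_mono) (auto simp: \<delta>_def)
        ultimately show False using n1 by simp
      qed
      interpret odeBf h a "Bo \<alpha>" Lm by (rule inst[OF \<alpha>])
      have cFe: "cF = cF0" by (simp add: cF_def cF0_def)
      have cRe: "cR = cR0" by (simp add: cR_def cR0_def)
      have nrK: "K * norm (\<nu> - \<rho>) < d / 2"
      proof -
        have "norm (\<nu> - \<rho>) < d / (2 * K)" using nr by (simp add: \<delta>_def)
        then have "K * norm (\<nu> - \<rho>) < K * (d / (2 * K))" using K1 by (intro mult_strict_left_mono) auto
        also have "\<dots> = d / 2" using K1 by (simp add: field_simps)
        finally show ?thesis .
      qed
      have c1: "exp (2 * cF * T) * norm (\<nu> - \<rho>) < d / 2"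
      proof -
        have "E0 * norm (\<nu> - \<rho>) \<le> K * norm (\<nu> - \<rho>)"
          unfolding K_def using cR00 T_pos E00 by (intro mult_right_mono) auto
        then show ?thesis using nrK by (simp add: cFe E0_def)
      qed
      have c2: "cR * T * exp (2 * cF * T) * norm (\<nu> - \<rho>) < d / 2"
      proof -
        have "cR0 * T * E0 * norm (\<nu> - \<rho>) \<le> K * norm (\<nu> - \<rho>)"
          unfolding K_def using cR00 T_pos E00 by (intro mult_right_mono) auto
        then show ?thesis using nrK by (simp add: cFe cRe E0_def)
      qed
      have "\<bar>JJ lamE fE h nu0 qd \<beta> T w a \<nu> (Bo \<alpha>) - JJ lamE fE h nu0 qd \<beta> T w a \<rho> (Bo \<alpha>)\<bar> \<le> T * (e / (T + 1))"
        by (rule JJ_close[OF bu BoU[OF \<alpha>] nD rD[unfolded ab[symmetric]] _ _ M d c1 c2]) (use beta_pos T_pos in auto)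
      also have "\<dots> \<le> e" using T_pos e by (simp add: field_simps)
      finally show ?thesis by (simp add: JJtr ab)
    qed
    then show ?thesis using \<delta>0 by blast
  qed
  have "\<forall>k::nat. \<exists>\<delta>>0. \<forall>\<alpha>\<in>Adm U. \<forall>a b \<nu> \<rho>. \<nu> \<in> Delta h a \<longrightarrow> \<rho> \<in> Delta h b \<longrightarrow> norm (\<nu> - \<rho>) < \<delta> \<longrightarrow>
      \<bar>JJ lam f h nu0 qd \<beta> T w a \<nu> \<alpha> - JJ lam f h nu0 qd \<beta> T w b \<rho> \<alpha>\<bar> \<le> inverse (real (Suc k))"
    by (intro allI Cl) simp
  then obtain dk where dk0: "\<And>k. 0 < dk k" and dk: "\<And>k \<alpha> a b \<nu> \<rho>. \<alpha> \<in> Adm U \<Longrightarrow> \<nu> \<in> Delta h a \<Longrightarrow> \<rho> \<in> Delta h b \<Longrightarrow> norm (\<nu> - \<rho>) < dk k \<Longrightarrow>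
      \<bar>JJ lam f h nu0 qd \<beta> T w a \<nu> \<alpha> - JJ lam f h nu0 qd \<beta> T w b \<rho> \<alpha>\<bar> \<le> inverse (real (Suc k))"
    by metis
  define ak where "ak k = inverse (real (Suc k))" for k
  define bk where "bk k = (2 * T * M' + 1) / dk k" for k
  define \<eta> where "\<eta> t = (INF k. ak k + bk k * t)" for t
  have M'0: "0 \<le> M'" by (simp add: M'_def)
  have bk0: "0 \<le> bk k" for k unfolding bk_def using T_pos M'0 dk0[of k] by simp
  have mod: "modulus_of_continuity \<eta>"
    unfolding \<eta>_def[abs_def] ak_def
    by (rule modulus_family(1)) (use bk0 LIMSEQ_inverse_real_of_nat in auto)
  have main: "\<bar>JJ lam f h nu0 qd \<beta> T w a \<nu> \<alpha> - JJ lam f h nu0 qd \<beta> T w b \<rho> \<alpha>\<bar> \<le> \<eta> (norm (\<nu> - \<rho>))"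
    if \<alpha>: "\<alpha> \<in> Adm U" and nD: "\<nu> \<in> Delta h a" and rD: "\<rho> \<in> Delta h b" for \<alpha> a b \<nu> \<rho>
  proof -
    let ?D = "\<bar>JJ lam f h nu0 qd \<beta> T w a \<nu> \<alpha> - JJ lam f h nu0 qd \<beta> T w b \<rho> \<alpha>\<bar>"
    have "?D \<le> ak k + bk k * norm (\<nu> - \<rho>)" for k
    proof (cases "norm (\<nu> - \<rho>) < dk k")
      case True
      then have "?D \<le> ak k" unfolding ak_def by (rule dk[OF \<alpha> nD rD])
      moreover have "0 \<le> bk k * norm (\<nu> - \<rho>)" using bk0 by simp
      ultimately show ?thesis by simp
    next
      case False
      have "?D \<le> T * M' + T * M'"
        using Bd[OF \<alpha> nD] Bd[OF \<alpha> rD] by linarith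
      also have "\<dots> < 2 * T * M' + 1" by simp
      also have "\<dots> = bk k * dk k" unfolding bk_def using dk0[of k] by simp
      also have "\<dots> \<le> bk k * norm (\<nu> - \<rho>)" using False bk0 by (intro mult_left_mono) auto
      also have "\<dots> \<le> ak k + bk k * norm (\<nu> - \<rho>)" unfolding ak_def by simp
      finally show ?thesis by simp
    qed
    then show ?thesis unfolding \<eta>_def by (intro cINF_greatest) auto
  qed
  have final: "\<forall>\<alpha>\<in>Adm U. \<forall>a b \<nu> \<rho>. \<nu> \<in> Delta h a \<longrightarrow> \<rho> \<in> Delta h b \<longrightarrow>
       \<bar>JJ lam f h nu0 qd \<beta> T w a \<nu> \<alpha> - JJ lam f h nu0 qd \<beta> T w b \<rho> \<alpha>\<bar>
         \<le> 1 * norm (\<nu> - \<rho>) + 1 * \<eta> (1 * norm (\<nu> - \<rho>))"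
  proof (intro ballI allI impI)
    fix \<alpha> a b \<nu> \<rho> assume \<alpha>: "\<alpha> \<in> Adm U" and nD: "\<nu> \<in> Delta h a" and rD: "\<rho> \<in> Delta h b"
    have "\<bar>JJ lam f h nu0 qd \<beta> T w a \<nu> \<alpha> - JJ lam f h nu0 qd \<beta> T w b \<rho> \<alpha>\<bar> \<le> \<eta> (norm (\<nu> - \<rho>))"
      by (rule main[OF \<alpha> nD rD])
    also have "\<dots> \<le> 1 * norm (\<nu> - \<rho>) + 1 * \<eta> (1 * norm (\<nu> - \<rho>))" by simp
    finally show "\<bar>JJ lam f h nu0 qd \<beta> T w a \<nu> \<alpha> - JJ lam f h nu0 qd \<beta> T w b \<rho> \<alpha>\<bar>
         \<le> 1 * norm (\<nu> - \<rho>) + 1 * \<eta> (1 * norm (\<nu> - \<rho>))" .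
  qed
  show ?thesis
    apply (rule exI[of _ 1], rule exI[of _ 1], rule exI[of _ 1], rule exI[of _ \<eta>])
    using mod final by simp
qed


end
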